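(* Let $I$ be an index set, $S,T\in GL(2,\mathbb C)$, and for $r\in I$ let $P_r=S\,\mathrm{diag}\{p_{1r},p_{2r}\}S^{-1}$, $Q_r=T\,\mathrm{diag}\{q_{1r},q_{2r}\}T^{-1}$ (all entries nonzero). There exists a homeomorphism $f\colon\mathbb CP^1\to\mathbb CP^1$ with $f(P_rv)=Q_rf(v)$ for all $v\in\mathbb CP^1$, $r\in I$, if and only if there exists a complex number $\alpha$ with $\operatorname{Re}\alpha\neq-1$ such that either $$\frac{q_{1r}}{q_{2r}}=\frac{p_{1r}}{p_{2r}}\Bigl|\frac{p_{1r}}{p_{2r}}\Bigr|^{\alpha}\ \text{for all }r\in I,\qquad\text{or}\qquad \frac{q_{1r}}{q_{2r}}=\frac{\overline{p_{1r}}}{\overline{p_{2r}}}\Bigl|\frac{p_{1r}}{p_{2r}}\Bigr|^{\alpha}\ \text{for all }r\in I.$$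
   Context: A matrix $P\in GL(n+1,\mathbb C)$ acts on $\mathbb CP^n$ by the induced linear-fractional (projective) transformation $v\mapsto Pv$ in homogeneous coordinates. For $t>0$, $t^\alpha=e^{\alpha\ln t}$. *)

theory Defs
  imports "HOL-Analysis.Analysis"
begin

text \<open>Points of CP^1: complex lines through 0 in C^2 (with 0 removed).\<close>
definition cproj :: "complex^2 \<Rightarrow> (complex^2) set" where
  "cproj v = {(\<chi> i. c * v $ i) | c. c \<noteq> 0}"

definition CP1 :: "(complex^2) set set" where
  "CP1 = cproj ` (UNIV - {0})"

text \<open>Quotient topology on CP^1 induced by cproj from C^2 minus the origin.\<close>
definition CP1_top :: "(complex^2) set topology" where
  "CP1_top = topology (\<lambda>U. U \<subseteq> CP1 \<and> open {v. v \<noteq> 0 \<and> cproj v \<in> U})"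

lemma istopology_CP1: "istopology (\<lambda>U. U \<subseteq> CP1 \<and> open {v. v \<noteq> 0 \<and> cproj v \<in> U})"
proof -
  have i: "{v. v \<noteq> 0 \<and> cproj v \<in> S \<inter> T} = {v. v \<noteq> 0 \<and> cproj v \<in> S} \<inter> {v. v \<noteq> 0 \<and> cproj v \<in> T}"
    for S T :: "(complex^2) set set" by auto
  have u: "{v. v \<noteq> 0 \<and> cproj v \<in> \<Union>K} = (\<Union>S\<in>K. {v. v \<noteq> 0 \<and> cproj v \<in> S})"
    for K :: "(complex^2) set set set" by auto
  show ?thesis unfolding istopology_def i u by (auto intro: open_Int open_UN)
qed

definition pact :: "complex^2^2 \<Rightarrow> (complex^2) set \<Rightarrow> (complex^2) set" where
  "pact P L = (\<lambda>v. P *v v) ` L"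

definition diag2 :: "complex \<Rightarrow> complex \<Rightarrow> complex^2^2" where
  "diag2 a b = (\<chi> i j. if i = j then (if i = 1 then a else b) else 0)"

definition cpowr :: "real \<Rightarrow> complex \<Rightarrow> complex" where
  "cpowr t \<alpha> = exp (\<alpha> * complex_of_real (ln t))"

end

theory Submission
  imports Defs "HOL-Analysis.Analysis"
begin


definition vec2 :: "complex \<Rightarrow> complex \<Rightarrow> complex^2" where
  "vec2 a b = (\<chi> i. if i = 1 then a else b)"

definition pt :: "complex \<Rightarrow> (complex^2) set" where "pt z = cproj (vec2 z 1)"
definition inf_pt :: "(complex^2) set" where "inf_pt = cproj (vec2 1 0)"

lemma vec2_nth[simp]: "vec2 a b $ 1 = a" "vec2 a b $ 2 = b"
  by (simp_all add: vec2_def)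

lemma vec2_eq_iff: "vec2 a b = vec2 c d \<longleftrightarrow> a = c \<and> b = d"
  by (metis vec2_nth)

lemma vec_eta2: "v = vec2 (v$1) (v$2)"
  by (simp add: vec_eq_iff vec2_def) (metis exhaust_2)

lemma vec2_zero_iff: "vec2 a b = 0 \<longleftrightarrow> a = 0 \<and> b = 0"
  by (simp add: vec_eq_iff forall_2)

lemma smult_vec2: "c *s vec2 a b = vec2 (c*a) (c*b)"
  by (simp add: vec_eq_iff vector_scalar_mult_def forall_2)

lemma cproj_alt: "cproj v = {c *s v | c. c \<noteq> 0}"
  by (simp add: cproj_def vector_scalar_mult_def)

lemma in_cproj_self: "v \<in> cproj v"
  unfolding cproj_alt by (rule CollectI, rule exI[of _ 1]) simp

lemma cproj_smult: "c \<noteq> 0 \<Longrightarrow> cproj (c *s v) = cproj v"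
proof -
  assume c: "c \<noteq> 0"
  have "cproj (c *s v) \<subseteq> cproj v"
    unfolding cproj_alt by (auto simp: c vector_smult_assoc)
  moreover have "cproj v \<subseteq> cproj (c *s v)"
  proof
    fix x assume "x \<in> cproj v"
    then obtain d where d: "d \<noteq> 0" "x = d *s v" unfolding cproj_alt by blast
    have "x = (d / c) *s (c *s v)" using c d by (simp add: vector_smult_assoc)
    then show "x \<in> cproj (c *s v)" unfolding cproj_alt using c d by (intro CollectI exI[of _ "d/c"]) auto
  qed
  ultimately show ?thesis by blast
qed

lemma cproj_eq_iff: "cproj u = cproj v \<longleftrightarrow> (\<exists>c. c \<noteq> 0 \<and> u = c *s v)"
proof
  assume "cproj u = cproj v"
  then have "u \<in> cproj v" using in_cproj_self by metis
  then show "\<exists>c. c \<noteq> 0 \<and> u = c *s v" unfolding cproj_alt by blast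
next
  assume "\<exists>c. c \<noteq> 0 \<and> u = c *s v"
  then show "cproj u = cproj v" using cproj_smult by blast
qed

lemma cproj_mem_CP1: "v \<noteq> 0 \<Longrightarrow> cproj v \<in> CP1"
  by (simp add: CP1_def)

lemma CP1_elim: "L \<in> CP1 \<Longrightarrow> \<exists>v. v \<noteq> 0 \<and> L = cproj v"
  by (auto simp: CP1_def)

lemma cproj_zero_iff: "cproj v = cproj 0 \<longleftrightarrow> v = 0"
  by (auto simp add: cproj_eq_iff intro: exI[of _ 1])

lemma cproj_vec2_fin: "b \<noteq> 0 \<Longrightarrow> cproj (vec2 a b) = pt (a/b)"
  unfolding pt_def cproj_eq_iff
  by (rule exI[of _ b]) (simp add: smult_vec2)

lemma cproj_vec2_inf: "a \<noteq> 0 \<Longrightarrow> cproj (vec2 a 0) = inf_pt"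
  unfolding inf_pt_def cproj_eq_iff
  by (rule exI[of _ a]) (simp add: smult_vec2)

lemma cproj_cases: "v \<noteq> 0 \<Longrightarrow> cproj v = (if v$2 = 0 then inf_pt else pt (v$1/v$2))"
proof -
  assume v: "v \<noteq> 0"
  have e: "cproj v = cproj (vec2 (v$1) (v$2))" using vec_eta2[of v] by simp
  show ?thesis
  proof (cases "v$2 = 0")
    case True
    then have "v$1 \<noteq> 0" using v vec_eta2[of v] vec2_zero_iff by metis
    then show ?thesis using True e cproj_vec2_inf by simp
  next
    case False
    then show ?thesis using e cproj_vec2_fin by simp
  qed
qed

lemma pt_inj: "pt a = pt b \<longleftrightarrow> a = b"
  unfolding pt_def cproj_eq_iff by (auto simp: smult_vec2 vec2_eq_iff)

lemma pt_ne_inf[simp]: "pt z \<noteq> inf_pt" "inf_pt \<noteq> pt z"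
  unfolding pt_def inf_pt_def cproj_eq_iff by (auto simp: smult_vec2 vec2_eq_iff)

lemma pt_CP1[simp]: "pt z \<in> CP1" and inf_CP1[simp]: "inf_pt \<in> CP1"
  unfolding pt_def inf_pt_def by (auto intro!: cproj_mem_CP1 simp: vec2_zero_iff)

lemma CP1_cases: "L \<in> CP1 \<Longrightarrow> L = inf_pt \<or> (\<exists>z. L = pt z)"
  using CP1_elim cproj_cases by metis


lemma openin_CP1: "openin CP1_top U \<longleftrightarrow> U \<subseteq> CP1 \<and> open {v. v \<noteq> 0 \<and> cproj v \<in> U}"
  by (simp add: CP1_top_def istopology_CP1)

lemma topspace_CP1[simp]: "topspace CP1_top = CP1"
proof -
  have "{v. v \<noteq> 0 \<and> cproj v \<in> CP1} = - {0}" using cproj_mem_CP1 by auto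
  then have "openin CP1_top CP1" by (simp add: openin_CP1 open_Compl)
  then show ?thesis using openin_subset openin_topspace
    by (metis openin_CP1 subset_antisym)
qed

lemma open_preimage_CP1:
  assumes "openin CP1_top U" "open A" "continuous_on A G" "\<forall>v\<in>A. G v \<noteq> 0"
  shows "open {v\<in>A. cproj (G v) \<in> U}"
proof -
  have o: "open {w. w \<noteq> 0 \<and> cproj w \<in> U}" using assms(1) openin_CP1 by blast
  have "{v\<in>A. cproj (G v) \<in> U} = A \<inter> G -` {w. w \<noteq> 0 \<and> cproj w \<in> U}"
    using assms(4) by auto
  moreover have "open (G -` {w. w \<noteq> 0 \<and> cproj w \<in> U} \<inter> A)"
    using continuous_on_open_vimage[OF assms(2)] assms(3) o by blast
  ultimately show ?thesis by (simp add: Int_commute)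
qed

lemma cont_CP1I:
  assumes "\<And>v. v \<noteq> 0 \<Longrightarrow> f (cproj v) \<in> CP1"
    and "\<And>U. openin CP1_top U \<Longrightarrow> open {v. v \<noteq> 0 \<and> f (cproj v) \<in> U}"
  shows "continuous_map CP1_top CP1_top f"
  unfolding continuous_map_def
proof (intro conjI allI impI)
  show "f \<in> topspace CP1_top \<rightarrow> topspace CP1_top"
    using assms(1) CP1_elim by auto
  fix U assume U: "openin CP1_top U"
  have "{v. v \<noteq> 0 \<and> cproj v \<in> {x \<in> topspace CP1_top. f x \<in> U}} = {v. v \<noteq> 0 \<and> f (cproj v) \<in> U}"
    using cproj_mem_CP1 by auto
  then show "openin CP1_top {x \<in> topspace CP1_top. f x \<in> U}"
    using assms(2)[OF U] by (simp add: openin_CP1)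
qed

lemma mv_smult: "(A::complex^2^2) *v (c *s v) = c *s (A *v v)"
  by (simp add: vec_eq_iff matrix_vector_mult_def vector_scalar_mult_def sum_distrib_left mult.left_commute)

lemma pact_cproj: "pact A (cproj v) = cproj (A *v v)"
proof -
  have "pact A (cproj v) = {A *v (c *s v) |c. c \<noteq> 0}" unfolding pact_def cproj_alt by auto
  then show ?thesis unfolding cproj_alt by (simp add: mv_smult)
qed

lemma pact_comp: "pact A (pact B L) = pact (A ** B) L"
  by (simp add: pact_def image_image matrix_vector_mul_assoc)

lemma pact_id: "pact (mat 1) L = L"
  by (simp add: pact_def)

lemma matrix_inv_props:
  assumes "invertible (A::complex^2^2)"
  shows "A ** matrix_inv A = mat 1" "matrix_inv A ** A = mat 1" "invertible (matrix_inv A)"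
proof -
  have "\<exists>A'. A ** A' = mat 1 \<and> A' ** A = mat 1" using assms invertible_def by blast
  then have *: "A ** matrix_inv A = mat 1 \<and> matrix_inv A ** A = mat 1"
    unfolding matrix_inv_def by (rule someI_ex)
  then show "A ** matrix_inv A = mat 1" "matrix_inv A ** A = mat 1" by auto
  show "invertible (matrix_inv A)" using * invertible_def by blast
qed

lemma inv_mv_nonzero: "invertible (A::complex^2^2) \<Longrightarrow> v \<noteq> 0 \<Longrightarrow> A *v v \<noteq> 0"
proof -
  assume a: "invertible A" "v \<noteq> 0"
  have "inj ((*v) A)" using inj_matrix_vector_mult a(1) by blast
  then have "A *v v \<noteq> A *v 0" using a(2) by (metis injD)
  then show ?thesis by simp
qed

lemma pact_CP1: "invertible A \<Longrightarrow> L \<in> CP1 \<Longrightarrow> pact A L \<in> CP1"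
  using CP1_elim pact_cproj cproj_mem_CP1 inv_mv_nonzero by metis

lemma pact_cont: assumes "invertible A" shows "continuous_map CP1_top CP1_top (pact A)"
proof (rule cont_CP1I)
  fix v :: "complex^2" assume "v \<noteq> 0"
  then show "pact A (cproj v) \<in> CP1" using pact_CP1 assms cproj_mem_CP1 by blast
next
  fix U assume U: "openin CP1_top U"
  have "open {v\<in>-{0}. cproj (A *v v) \<in> U}"
    by (rule open_preimage_CP1[OF U]) (use inv_mv_nonzero[OF assms] in \<open>auto intro: linear_continuous_on\<close>)
  moreover have "{v\<in>-{0}. cproj (A *v v) \<in> U} = {v. v \<noteq> 0 \<and> pact A (cproj v) \<in> U}"
    by (auto simp: pact_cproj)
  ultimately show "open {v. v \<noteq> 0 \<and> pact A (cproj v) \<in> U}" by simp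
qed

lemma pact_homeo_maps: assumes "invertible A"
  shows "homeomorphic_maps CP1_top CP1_top (pact A) (pact (matrix_inv A))"
  unfolding homeomorphic_maps_def
  using pact_cont[OF assms] pact_cont[OF matrix_inv_props(3)[OF assms]]
  by (simp add: pact_comp matrix_inv_props[OF assms] pact_id)

lemma pact_homeo: "invertible A \<Longrightarrow> homeomorphic_map CP1_top CP1_top (pact A)"
  using pact_homeo_maps homeomorphic_map_maps by blast


lemma diag_mv: "diag2 a b *v vec2 x y = vec2 (a*x) (b*y)"
  unfolding vec_eq_iff forall_2 matrix_vector_mult_def sum_2
  by (simp add: diag2_def)

lemma pact_diag_pt: "b \<noteq> 0 \<Longrightarrow> pact (diag2 a b) (pt z) = pt (a/b*z)"
proof -
  assume b: "b \<noteq> 0"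
  have "pact (diag2 a b) (pt z) = cproj (vec2 (a*z) b)" by (simp add: pt_def pact_cproj diag_mv)
  also have "\<dots> = pt (a/b*z)" using b cproj_vec2_fin by simp
  finally show ?thesis .
qed

lemma pact_diag_inf: "a \<noteq> 0 \<Longrightarrow> pact (diag2 a b) inf_pt = inf_pt"
proof -
  assume a: "a \<noteq> 0"
  have "pact (diag2 a b) inf_pt = cproj (vec2 a 0)" by (simp add: inf_pt_def pact_cproj diag_mv)
  also have "\<dots> = inf_pt" using a cproj_vec2_inf by simp
  finally show ?thesis .
qed

lemma reduce_ST:
  fixes S T :: "complex^2^2" and D E :: "'i \<Rightarrow> complex^2^2"
  assumes S: "invertible S" and T: "invertible T"
  shows "(\<exists>f. homeomorphic_map CP1_top CP1_top f \<and>
            (\<forall>r\<in>I. \<forall>v\<in>CP1. f (pact (S ** D r ** matrix_inv S) v) = pact (T ** E r ** matrix_inv T) (f v)))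
     \<longleftrightarrow> (\<exists>g. homeomorphic_map CP1_top CP1_top g \<and>
            (\<forall>r\<in>I. \<forall>v\<in>CP1. g (pact (D r) v) = pact (E r) (g v)))"
proof
  note SS = matrix_inv_props[OF S] and TT = matrix_inv_props[OF T]
  assume "\<exists>f. homeomorphic_map CP1_top CP1_top f \<and>
            (\<forall>r\<in>I. \<forall>v\<in>CP1. f (pact (S ** D r ** matrix_inv S) v) = pact (T ** E r ** matrix_inv T) (f v))"
  then obtain f where f: "homeomorphic_map CP1_top CP1_top f"
    and fc: "\<forall>r\<in>I. \<forall>v\<in>CP1. f (pact (S ** D r ** matrix_inv S) v) = pact (T ** E r ** matrix_inv T) (f v)"
    by blast
  define g where "g = pact (matrix_inv T) \<circ> f \<circ> pact S"
  have "homeomorphic_map CP1_top CP1_top g"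
    unfolding g_def
    by (rule homeomorphic_map_compose[OF pact_homeo[OF S] homeomorphic_map_compose[OF f pact_homeo[OF TT(3)]]])
  moreover have "\<forall>r\<in>I. \<forall>v\<in>CP1. g (pact (D r) v) = pact (E r) (g v)"
  proof (intro ballI)
    fix r v assume r: "r \<in> I" and v: "v \<in> CP1"
    have e1: "(S ** D r ** matrix_inv S) ** S = S ** D r"
      by (metis matrix_mul_assoc matrix_mul_rid SS(2))
    have "pact S (pact (D r) v) = pact (S ** D r ** matrix_inv S) (pact S v)"
      by (simp only: pact_comp e1)
    then have "f (pact S (pact (D r) v)) = pact (T ** E r ** matrix_inv T) (f (pact S v))"
      using fc r pact_CP1[OF S v] by simp
    moreover have e2: "matrix_inv T ** (T ** E r ** matrix_inv T) = E r ** matrix_inv T"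
      by (metis matrix_mul_assoc matrix_mul_lid TT(2))
    ultimately show "g (pact (D r) v) = pact (E r) (g v)"
      by (simp only: g_def o_def pact_comp e2)
  qed
  ultimately show "\<exists>g. homeomorphic_map CP1_top CP1_top g \<and>
            (\<forall>r\<in>I. \<forall>v\<in>CP1. g (pact (D r) v) = pact (E r) (g v))" by blast
next
  note SS = matrix_inv_props[OF S] and TT = matrix_inv_props[OF T]
  assume "\<exists>g. homeomorphic_map CP1_top CP1_top g \<and>
            (\<forall>r\<in>I. \<forall>v\<in>CP1. g (pact (D r) v) = pact (E r) (g v))"
  then obtain g where g: "homeomorphic_map CP1_top CP1_top g"
    and gc: "\<forall>r\<in>I. \<forall>v\<in>CP1. g (pact (D r) v) = pact (E r) (g v)" by blast
  define f where "f = pact T \<circ> g \<circ> pact (matrix_inv S)"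
  have "homeomorphic_map CP1_top CP1_top f"
    unfolding f_def
    by (rule homeomorphic_map_compose[OF pact_homeo[OF SS(3)] homeomorphic_map_compose[OF g pact_homeo[OF T]]])
  moreover have "\<forall>r\<in>I. \<forall>v\<in>CP1. f (pact (S ** D r ** matrix_inv S) v) = pact (T ** E r ** matrix_inv T) (f v)"
  proof (intro ballI)
    fix r v assume r: "r \<in> I" and v: "v \<in> CP1"
    have e1: "matrix_inv S ** (S ** D r ** matrix_inv S) = D r ** matrix_inv S"
      by (metis matrix_mul_assoc matrix_mul_lid SS(2))
    have "pact (matrix_inv S) (pact (S ** D r ** matrix_inv S) v) = pact (D r) (pact (matrix_inv S) v)"
      by (simp only: pact_comp e1)
    then have "g (pact (matrix_inv S) (pact (S ** D r ** matrix_inv S) v)) = pact (E r) (g (pact (matrix_inv S) v))"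
      using gc r pact_CP1[OF SS(3) v] by simp
    moreover have e2: "(T ** E r ** matrix_inv T) ** T = T ** E r"
      by (metis matrix_mul_assoc matrix_mul_rid TT(2))
    ultimately show "f (pact (S ** D r ** matrix_inv S) v) = pact (T ** E r ** matrix_inv T) (f v)"
      by (simp only: f_def o_def pact_comp e2)
  qed
  ultimately show "\<exists>f. homeomorphic_map CP1_top CP1_top f \<and>
            (\<forall>r\<in>I. \<forall>v\<in>CP1. f (pact (S ** D r ** matrix_inv S) v) = pact (T ** E r ** matrix_inv T) (f v))" by blast
qed


lemma continuous_on_vec2[continuous_intros]:
  "continuous_on S f \<Longrightarrow> continuous_on S g \<Longrightarrow> continuous_on S (\<lambda>x. vec2 (f x) (g x))"
  unfolding vec2_def apply (rule continuous_on_vec_lambda)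
  subgoal for i by (cases "i = 1") auto
  done

definition Gh :: "(complex \<Rightarrow> complex) \<Rightarrow> complex^2 \<Rightarrow> complex^2" where
  "Gh F v = (if v$2 = 0 then vec2 1 0 else vec2 (F (v$1/v$2)) 1)"

definition Phi :: "(complex \<Rightarrow> complex) \<Rightarrow> (complex^2) set \<Rightarrow> (complex^2) set" where
  "Phi F L = cproj (Gh F (SOME v. v \<in> L \<and> v \<noteq> 0))"

lemma Gh_smult: "c \<noteq> 0 \<Longrightarrow> Gh F (c *s v) = Gh F v"
  by (simp add: Gh_def vector_scalar_mult_def)

lemma Phi_cproj: assumes "v \<noteq> 0" shows "Phi F (cproj v) = cproj (Gh F v)"
proof -
  have "\<exists>w. w \<in> cproj v \<and> w \<noteq> 0" using assms in_cproj_self by blast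
  then have "(SOME w. w \<in> cproj v \<and> w \<noteq> 0) \<in> cproj v" by (rule someI2_ex) auto
  then obtain c where "c \<noteq> 0" "(SOME w. w \<in> cproj v \<and> w \<noteq> 0) = c *s v"
    unfolding cproj_alt by blast
  then show ?thesis by (simp add: Phi_def Gh_smult)
qed

lemma Phi_pt: "Phi F (pt z) = pt (F z)"
proof -
  have "Phi F (pt z) = cproj (Gh F (vec2 z 1))"
    unfolding pt_def by (rule Phi_cproj) (simp add: vec2_zero_iff)
  also have "\<dots> = pt (F z)" by (simp add: Gh_def pt_def)
  finally show ?thesis .
qed

lemma Phi_inf: "Phi F inf_pt = inf_pt"
proof -
  have "Phi F inf_pt = cproj (Gh F (vec2 1 0))"
    unfolding inf_pt_def by (rule Phi_cproj) (simp add: vec2_zero_iff)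
  also have "\<dots> = inf_pt" by (simp add: Gh_def inf_pt_def)
  finally show ?thesis .
qed

lemma Phi_CP1: "L \<in> CP1 \<Longrightarrow> Phi F L \<in> CP1"
  using CP1_cases Phi_pt Phi_inf by (metis pt_CP1 inf_CP1)

lemma Phi_comp: "L \<in> CP1 \<Longrightarrow> Phi F (Phi G L) = Phi (F \<circ> G) L"
  using CP1_cases Phi_pt Phi_inf by (metis o_apply)

lemma Phi_id: "(\<And>z. F z = z) \<Longrightarrow> L \<in> CP1 \<Longrightarrow> Phi F L = L"
  using CP1_cases Phi_pt Phi_inf by metis

lemma Phi_equiv:
  assumes "b \<noteq> 0" "a \<noteq> 0" "d \<noteq> 0" "c \<noteq> 0" "\<And>z. F (a/b*z) = c/d * F z" "L \<in> CP1"
  shows "Phi F (pact (diag2 a b) L) = pact (diag2 c d) (Phi F L)"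
  using CP1_cases[OF assms(6)] assms
  by (auto simp: Phi_pt Phi_inf pact_diag_pt pact_diag_inf)

lemma open_neq_comp: "open {v::complex^2. v$i \<noteq> 0}"
  by (intro open_Collect_neq continuous_intros)

lemma Phi_cont:
  assumes cF: "continuous_on UNIV F" and cF': "continuous_on UNIV (\<lambda>u. inverse (F (inverse u)))"
    and F0: "\<And>z. F z = 0 \<longleftrightarrow> z = 0"
  shows "continuous_map CP1_top CP1_top (Phi F)"
proof (rule cont_CP1I)
  fix v :: "complex^2" assume "v \<noteq> 0"
  then show "Phi F (cproj v) \<in> CP1" using Phi_CP1 cproj_mem_CP1 by blast
next
  fix U assume U: "openin CP1_top U"
  define G1 where "G1 v = vec2 (F (v$1/v$2)) 1" for v :: "complex^2"
  define G2 where "G2 v = vec2 1 (inverse (F (inverse (v$2/v$1))))" for v :: "complex^2"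
  have e1: "Phi F (cproj v) = cproj (G1 v)" if "v$2 \<noteq> 0" for v
  proof -
    have "v \<noteq> 0" using that by auto
    then show ?thesis using that by (simp add: Phi_cproj Gh_def G1_def)
  qed
  have e2: "Phi F (cproj v) = cproj (G2 v)" if "v$1 \<noteq> 0" for v
  proof -
    have v: "v \<noteq> 0" using that by auto
    show ?thesis
    proof (cases "v$2 = 0")
      case True
      have "F 0 = 0" using F0 by simp
      then show ?thesis using v True by (simp add: Phi_cproj Gh_def G2_def)
    next
      case False
      define z where "z = v$1/v$2"
      have z: "z \<noteq> 0" using False that by (simp add: z_def)
      have iz: "inverse (v$2/v$1) = z" by (simp add: z_def)
      have "Phi F (cproj v) = cproj (vec2 (F z) 1)" using v False by (simp add: Phi_cproj Gh_def z_def)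
      also have "\<dots> = cproj (vec2 1 (inverse (F z)))"
        unfolding cproj_eq_iff using F0 z by (intro exI[of _ "F z"]) (simp add: smult_vec2)
      finally show ?thesis by (simp add: G2_def iz z_def)
    qed
  qed
  have "{v. v \<noteq> 0 \<and> Phi F (cproj v) \<in> U} =
        {v\<in>{v. v$2 \<noteq> 0}. cproj (G1 v) \<in> U} \<union> {v\<in>{v. v$1 \<noteq> 0}. cproj (G2 v) \<in> U}"
  proof -
    have nz: "v \<noteq> 0 \<longleftrightarrow> v$1 \<noteq> 0 \<or> v$2 \<noteq> 0" for v :: "complex^2"
      by (metis vec_eta2 vec2_zero_iff zero_index)
    show ?thesis using e1 e2 nz by auto
  qed
  moreover have "open {v\<in>{v. v$2 \<noteq> 0}. cproj (G1 v) \<in> U}"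
    by (rule open_preimage_CP1[OF U open_neq_comp])
      (auto simp: G1_def vec2_zero_iff intro!: continuous_intros continuous_on_compose2[OF cF])
  moreover have "open {v\<in>{v. v$1 \<noteq> 0}. cproj (G2 v) \<in> U}"
  proof (rule open_preimage_CP1[OF U open_neq_comp])
    have "continuous_on {v. v$1 \<noteq> 0} (\<lambda>v::complex^2. v$2/v$1)"
      by (intro continuous_intros) auto
    then have "continuous_on {v. v$1 \<noteq> 0} (\<lambda>v::complex^2. inverse (F (inverse (v$2/v$1))))"
      using continuous_on_compose2[OF cF', of _ "\<lambda>v::complex^2. v$2/v$1"] by auto
    then show "continuous_on {v. v$1 \<noteq> 0} G2" unfolding G2_def
      by (rule continuous_on_vec2[OF continuous_on_const])
    show "\<forall>v\<in>{v. v $ 1 \<noteq> 0}. G2 v \<noteq> 0" by (simp add: G2_def vec2_zero_iff)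
  qed
  ultimately show "open {v. v \<noteq> 0 \<and> Phi F (cproj v) \<in> U}" by auto
qed

lemma Phi_homeo:
  assumes "continuous_on UNIV F" "continuous_on UNIV (\<lambda>u. inverse (F (inverse u)))" "\<And>z. F z = 0 \<longleftrightarrow> z = 0"
    and "continuous_on UNIV F'" "continuous_on UNIV (\<lambda>u. inverse (F' (inverse u)))" "\<And>z. F' z = 0 \<longleftrightarrow> z = 0"
    and "\<And>z. F (F' z) = z" "\<And>z. F' (F z) = z"
  shows "homeomorphic_map CP1_top CP1_top (Phi F)"
proof -
  have "homeomorphic_maps CP1_top CP1_top (Phi F) (Phi F')"
    unfolding homeomorphic_maps_def
    using Phi_cont[OF assms(1-3)] Phi_cont[OF assms(4-6)]
    by (auto simp: Phi_comp Phi_id assms(7,8))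
  then show ?thesis using homeomorphic_map_maps by blast
qed


lemma cpowr_nz[simp]: "cpowr t a \<noteq> 0" by (simp add: cpowr_def)

lemma cpowr_norm: "t > 0 \<Longrightarrow> cmod (cpowr t a) = t powr Re a"
  by (simp add: cpowr_def powr_def mult.commute)

lemma cpowr_mult: "s > 0 \<Longrightarrow> t > 0 \<Longrightarrow> cpowr (s*t) a = cpowr s a * cpowr t a"
  by (simp add: cpowr_def ln_mult_pos distrib_left exp_add)

lemma cpowr_inverse: "t > 0 \<Longrightarrow> cpowr (inverse t) a = inverse (cpowr t a)"
  by (simp add: cpowr_def ln_inverse exp_minus)

lemma cpowr_add: "cpowr t (a + b) = cpowr t a * cpowr t b"
  by (simp add: cpowr_def distrib_right exp_add)

lemma cpowr_zero_exp[simp]: "cpowr t 0 = 1" by (simp add: cpowr_def)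
lemma cpowr_one[simp]: "cpowr 1 a = 1" by (simp add: cpowr_def)

definition Fm :: "bool \<Rightarrow> complex \<Rightarrow> complex \<Rightarrow> complex" where
  "Fm c a z = (if c then cnj z else z) * cpowr (cmod z) a"

lemma Fm_0[simp]: "Fm c a 0 = 0" by (simp add: Fm_def)

lemma Fm_eq_0: "Fm c a z = 0 \<longleftrightarrow> z = 0" by (simp add: Fm_def)

lemma Fm_norm: "cmod (Fm c a z) = cmod z powr (1 + Re a)"
proof (cases "z = 0")
  case False
  then have "cmod (Fm c a z) = cmod z * cmod z powr Re a"
    by (simp add: Fm_def norm_mult cpowr_norm)
  also have "\<dots> = cmod z powr (1 + Re a)" using False by (simp add: powr_add)
  finally show ?thesis .
qed (simp add: Fm_def)

lemma Fm_cont: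
  assumes "Re a > -1" shows "continuous_on UNIV (Fm c a)"
proof -
  have "isCont (Fm c a) z" for z
  proof (cases "z = 0")
    case False
    have "isCont (\<lambda>z. cpowr (cmod z) a) z"
      unfolding cpowr_def using False by (intro continuous_intros) auto
    then show ?thesis unfolding Fm_def by (cases c) (auto intro!: continuous_intros)
  next
    case True
    have "((\<lambda>z. cmod z powr (1 + Re a)) \<longlongrightarrow> 0) (at 0)"
      by (rule tendsto_zero_powrI) (use assms in \<open>auto intro!: tendsto_eq_intros\<close>)
    then have "((\<lambda>z. cmod (Fm c a z)) \<longlongrightarrow> 0) (at 0)" by (simp add: Fm_norm)
    then have "(Fm c a \<longlongrightarrow> 0) (at 0)" by (simp add: tendsto_norm_zero_iff)
    then show ?thesis using True by (simp add: isCont_def)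
  qed
  then show ?thesis by (simp add: continuous_at_imp_continuous_on)
qed

lemma Fm_inv_inv: "inverse (Fm c a (inverse u)) = Fm c a u"
proof (cases "u = 0")
  case False
  have "cmod (inverse u) = inverse (cmod u)" by (simp add: norm_inverse)
  then show ?thesis using False
    by (simp add: Fm_def cpowr_inverse)
qed (simp add: Fm_def)

lemma Fm_equiv:
  assumes "l \<noteq> 0"
  shows "Fm c a (l * z) = ((if c then cnj l else l) * cpowr (cmod l) a) * Fm c a z"
proof (cases "z = 0")
  case False
  then show ?thesis using assms by (simp add: Fm_def norm_mult cpowr_mult)
qed (simp add: Fm_def)

definition ainv :: "bool \<Rightarrow> complex \<Rightarrow> complex" where
  "ainv c a = (if c then - cnj a else - a) / (1 + Re a)"

lemma ainv_Re: "Re a > -1 \<Longrightarrow> 1 + Re (ainv c a) = 1 / (1 + Re a)"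
  by (cases c) (simp_all add: ainv_def field_simps)

lemma ainv_gt: "Re a > -1 \<Longrightarrow> Re (ainv c a) > -1"
proof -
  assume a: "Re a > -1"
  then have "1/(1+Re a) > 0" by simp
  then show ?thesis using ainv_Re[OF a, of c] by linarith
qed

lemma ainv_ainv: "Re a > -1 \<Longrightarrow> ainv c (ainv c a) = a"
  using ainv_Re[of a c] by (cases c) (auto simp: ainv_def field_simps complex_eq_iff)

lemma Fm_Fm_ainv:
  assumes "Re a > -1" shows "Fm c a (Fm c (ainv c a) z) = z"
proof (cases "z = 0")
  case False
  define b where "b = ainv c a"
  define L where "L = ln (cmod z)"
  have n: "cmod (Fm c b z) = cmod z powr (1 + Re b)" by (rule Fm_norm)
  have lnw: "ln (cmod (Fm c b z)) = L / (1 + Re a)"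
  proof -
    have "ln (cmod (Fm c b z)) = (1 + Re b) * L" using False by (simp add: n ln_powr L_def)
    also have "1 + Re b = 1 / (1 + Re a)" unfolding b_def by (rule ainv_Re[OF assms])
    finally show ?thesis by simp
  qed
  have "Fm c a (Fm c b z) = (if c then cnj (Fm c b z) else Fm c b z) * exp (a * of_real (L / (1 + Re a)))"
    unfolding Fm_def[of c a "Fm c b z"] cpowr_def lnw by (rule refl)
  also have "\<dots> = z * exp ((if c then cnj b else b) * of_real L + a * of_real (L / (1 + Re a)))"
    by (cases c) (simp_all add: Fm_def cpowr_def L_def exp_cnj exp_add)
  also have "(if c then cnj b else b) * of_real L + a * of_real (L / (1 + Re a)) = 0"
    using assms by (cases c) (simp_all add: b_def ainv_def field_simps)
  finally show ?thesis by (simp add: b_def)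
qed (simp add: Fm_def)

lemma Phi_Fm_homeo:
  assumes "Re a > -1" shows "homeomorphic_map CP1_top CP1_top (Phi (Fm c a))"
proof (rule Phi_homeo[where F' = "Fm c (ainv c a)"])
  show "continuous_on UNIV (Fm c a)" using Fm_cont assms by blast
  show "continuous_on UNIV (\<lambda>u. inverse (Fm c a (inverse u)))" using Fm_cont assms by (simp add: Fm_inv_inv)
  show "continuous_on UNIV (Fm c (ainv c a))" using Fm_cont ainv_gt assms by blast
  show "continuous_on UNIV (\<lambda>u. inverse (Fm c (ainv c a) (inverse u)))"
    using Fm_cont ainv_gt assms by (simp add: Fm_inv_inv)
  show "Fm c a (Fm c (ainv c a) z) = z" for z using Fm_Fm_ainv assms by blast
  show "Fm c (ainv c a) (Fm c a z) = z" for z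
    using Fm_Fm_ainv[of "ainv c a" c z] ainv_gt[OF assms, of c] ainv_ainv[OF assms, of c] by simp
qed (simp_all add: Fm_eq_0)


definition Jm :: "complex^2^2" where "Jm = (\<chi> i j. if i = j then 0 else 1)"

lemma Jm_diag: "Jm ** diag2 a b = diag2 b a ** Jm"
  unfolding vec_eq_iff forall_2 matrix_matrix_mult_def sum_2
  by (simp add: Jm_def diag2_def)

lemma Jm_Jm: "Jm ** Jm = mat 1"
  unfolding vec_eq_iff forall_2 matrix_matrix_mult_def sum_2
  by (simp add: Jm_def mat_def)

lemma Jm_inv: "invertible Jm"
  using Jm_Jm invertible_def by blast

lemma pact_Jm_diag: "pact Jm (pact (diag2 a b) L) = pact (diag2 b a) (pact Jm L)"
  by (simp add: pact_comp Jm_diag)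

lemma flip_coeff:
  assumes "l \<noteq> 0"
  shows "((if \<not> c then cnj l else l) * cpowr (cmod l) (- a - 2)) * ((if c then cnj l else l) * cpowr (cmod l) a) = 1"
proof -
  have t: "cmod l > 0" using assms by simp
  have "cpowr (cmod l) (- a - 2) * cpowr (cmod l) a = cpowr (cmod l) (-2)"
    by (simp add: cpowr_add[symmetric])
  also have "\<dots> = inverse (exp (of_real (ln (cmod l))) ^ 2)"
    by (simp add: cpowr_def exp_minus exp_of_nat_mult[symmetric])
  also have "exp (of_real (ln (cmod l))) = of_real (cmod l)"
    using t by (simp add: exp_of_real)
  finally have e: "cpowr (cmod l) (- a - 2) * cpowr (cmod l) a = inverse (of_real (cmod l) ^ 2)" .
  have "cnj l * l = of_real (cmod l) ^ 2"
    using complex_norm_square[of l] by (simp add: mult.commute)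
  then have "((if \<not> c then cnj l else l) * cpowr (cmod l) (- a - 2)) * ((if c then cnj l else l) * cpowr (cmod l) a)
     = (cnj l * l) * (cpowr (cmod l) (- a - 2) * cpowr (cmod l) a)"
    by (cases c) (simp_all add: algebra_simps)
  also have "\<dots> = 1" using e t \<open>cnj l * l = _\<close> by simp
  finally show ?thesis .
qed

lemma backward_diag:
  fixes p1 p2 q1 q2 :: "'i \<Rightarrow> complex"
  assumes nz: "\<forall>r\<in>I. p1 r \<noteq> 0 \<and> p2 r \<noteq> 0 \<and> q1 r \<noteq> 0 \<and> q2 r \<noteq> 0"
    and a: "Re a \<noteq> -1"
    and q: "\<forall>r\<in>I. q1 r / q2 r = ((if c then cnj (p1 r / p2 r) else p1 r / p2 r) * cpowr (cmod (p1 r / p2 r)) a)"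
  shows "\<exists>g. homeomorphic_map CP1_top CP1_top g \<and>
            (\<forall>r\<in>I. \<forall>v\<in>CP1. g (pact (diag2 (p1 r) (p2 r)) v) = pact (diag2 (q1 r) (q2 r)) (g v))"
proof (cases "Re a > -1")
  case True
  show ?thesis
  proof (intro exI conjI ballI)
    show "homeomorphic_map CP1_top CP1_top (Phi (Fm c a))" using Phi_Fm_homeo True by blast
    fix r v assume r: "r \<in> I" and v: "v \<in> CP1"
    show "Phi (Fm c a) (pact (diag2 (p1 r) (p2 r)) v) = pact (diag2 (q1 r) (q2 r)) (Phi (Fm c a) v)"
    proof (rule Phi_equiv)
      show "Fm c a (p1 r / p2 r * z) = q1 r / q2 r * Fm c a z" for z
        using Fm_equiv[of "p1 r / p2 r" c a z] nz q r by simp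
    qed (use nz r v in auto)
  qed
next
  case False
  then have a2: "Re (- a - 2) > -1" using a by simp
  define g where "g = pact Jm \<circ> Phi (Fm (\<not> c) (- a - 2))"
  show ?thesis
  proof (intro exI conjI ballI)
    show "homeomorphic_map CP1_top CP1_top g"
      unfolding g_def using homeomorphic_map_compose[OF Phi_Fm_homeo[OF a2] pact_homeo[OF Jm_inv]] by blast
    fix r v assume r: "r \<in> I" and v: "v \<in> CP1"
    have "Phi (Fm (\<not> c) (- a - 2)) (pact (diag2 (p1 r) (p2 r)) v) = pact (diag2 (q2 r) (q1 r)) (Phi (Fm (\<not> c) (- a - 2)) v)"
    proof (rule Phi_equiv)
      fix z
      define l where "l = p1 r / p2 r"
      have l: "l \<noteq> 0" using nz r by (simp add: l_def)
      have "q2 r / q1 r = inverse (q1 r / q2 r)" by simp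
      also have "\<dots> = (if \<not> c then cnj l else l) * cpowr (cmod l) (- a - 2)"
      proof -
        have qq: "q1 r/q2 r = (if c then cnj l else l) * cpowr (cmod l) a"
          unfolding l_def using q r by auto
        show ?thesis unfolding qq
          by (metis mult.commute inverse_unique flip_coeff[OF l, of c a])
      qed
      finally show "Fm (\<not> c) (- a - 2) (p1 r / p2 r * z) = q2 r / q1 r * Fm (\<not> c) (- a - 2) z"
        using Fm_equiv[OF l, of "\<not> c" "- a - 2" z] by (simp add: l_def)
    qed (use nz r v in auto)
    then show "g (pact (diag2 (p1 r) (p2 r)) v) = pact (diag2 (q1 r) (q2 r)) (g v)"
      by (simp add: g_def pact_Jm_diag)
  qed
qed


lemma dirichlet2:
  fixes t1 t2 :: real and N :: nat
  assumes "N > 0"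
  obtains m n k :: int where "m > 0" "\<bar>of_int m * t1 - of_int n\<bar> < 1/N" "\<bar>of_int m * t2 - of_int k\<bar> < 1/N"
proof -
  define th :: "nat \<Rightarrow> real" where "th = (\<lambda>i. if i = 0 then t1 else t2)"
  obtain q p where q: "0 < q" and pp: "\<And>i. i < 2 \<Longrightarrow> \<bar>of_int q * th i - of_int (p i)\<bar> < 1/N"
    using Dirichlet_approx_simult[OF assms, of 2 th] by metis
  have "\<bar>of_int q * t1 - of_int (p 0)\<bar> < 1/N" using pp[of 0] by (simp add: th_def)
  moreover have "\<bar>of_int q * t2 - of_int (p 1)\<bar> < 1/N" using pp[of 1] by (simp add: th_def)
  ultimately show ?thesis using that q(1) by blast
qed

locale addgrp =
  fixes G :: "complex set" and E :: "complex \<Rightarrow> complex"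
  assumes add: "\<And>a b. a \<in> G \<Longrightarrow> b \<in> G \<Longrightarrow> a + b \<in> G \<and> E (a + b) = E a + E b"
    and neg: "\<And>a. a \<in> G \<Longrightarrow> - a \<in> G"
    and tp: "2 * pi * \<i> \<in> G" "E (2 * pi * \<i>) = 0"
    and cont: "\<And>e. e > 0 \<Longrightarrow> \<exists>d>0. \<forall>a\<in>G. cmod a < d \<longrightarrow> cmod (E a) < e"
begin

lemma zero: "0 \<in> G" "E 0 = 0"
proof -
  show z: "0 \<in> G" using add[OF tp(1) neg[OF tp(1)]] by simp
  show "E 0 = 0" using add[OF z z] by simp
qed

lemma Eneg: "a \<in> G \<Longrightarrow> E (- a) = - E a"
proof -
  assume a: "a \<in> G"
  have "E (a + - a) = E a + E (- a)" using add[OF a neg[OF a]] by blast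
  then show ?thesis using zero by (simp add: eq_neg_iff_add_eq_0 add.commute)
qed

lemma nat_mult: "a \<in> G \<Longrightarrow> of_nat n * a \<in> G \<and> E (of_nat n * a) = of_nat n * E a"
proof (induction n)
  case 0 then show ?case using zero by simp
next
  case (Suc n)
  have e: "of_nat (Suc n) * a = of_nat n * a + a" by (simp add: distrib_right)
  show ?case unfolding e using add[of "of_nat n * a" a] Suc by (simp add: distrib_right)
qed

lemma int_mult: assumes "a \<in> G" shows "of_int k * a \<in> G \<and> E (of_int k * a) = of_int k * E a"
proof (cases "k \<ge> 0")
  case True
  define n where "n = nat k"
  have "k = int n" using True by (simp add: n_def)
  then show ?thesis using nat_mult[OF assms, of n] by simp
next
  case False
  define n where "n = nat (- k)"
  have k: "k = - int n" using False by (simp add: n_def)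
  have "- (of_nat n * a) \<in> G" using nat_mult[OF assms, of n] neg by blast
  moreover have "E (- (of_nat n * a)) = - (of_nat n * E a)" using nat_mult[OF assms, of n] Eneg by simp
  ultimately show ?thesis using k by simp
qed

lemma sub: "a \<in> G \<Longrightarrow> b \<in> G \<Longrightarrow> a - b \<in> G \<and> E (a - b) = E a - E b"
  using add[OF _ neg, of a b] Eneg[of b] by simp

lemma approx_step:
  assumes g: "g \<in> G" and g0: "g0 \<in> G" and t1: "Re g = t1 * Re g0" and b: "E g0 = \<beta> * of_real (Re g0)"
  shows "E g = \<beta> * of_real (Re g)"
proof -
  have "cmod (E g - \<beta> * of_real (Re g)) < e" if e: "e > 0" for e
  proof -
    define t2 where "t2 = (Im g - t1 * Im g0) / (2 * pi)"
    define C where "C = \<bar>Re g0\<bar> + 2 * pi + \<bar>Im g0\<bar> + 1"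
    have C: "C > 0" unfolding C_def using pi_gt_zero by linarith
    obtain d where d: "d > 0" "\<forall>a\<in>G. cmod a < d \<longrightarrow> cmod (E a) < e/2" using cont[of "e/2"] e by auto
    obtain N :: nat where N: "real N > C / d + 2 * (cmod \<beta> + 1) * C / e" using reals_Archimedean2 by blast
    have b1: "cmod \<beta> + 1 > 0" using norm_ge_zero[of \<beta>] by linarith
    have pos1: "C / d > 0" "2 * (cmod \<beta> + 1) * C / e > 0" using C d e b1 by (auto intro!: divide_pos_pos mult_pos_pos)
    then have N0r: "real N > 0" using N by linarith
    then have N0: "N > 0" by simp
    have NC1: "C / N < d"
    proof -
      have "C / d < real N" using N pos1 by linarith
      then have "C < real N * d" using d by (simp add: divide_less_eq)
      then show ?thesis using N0r by (simp add: divide_less_eq mult.commute)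
    qed
    have NC2: "cmod \<beta> * (C / N) < e / 2"
    proof -
      have "2 * (cmod \<beta> + 1) * C / e < N" using N pos1 by linarith
      then have "2 * (cmod \<beta> + 1) * C < N * e" using e by (simp add: field_simps)
      moreover have "2 * cmod \<beta> * C \<le> 2 * (cmod \<beta> + 1) * C" using C by (simp add: mult_right_mono)
      ultimately have "2 * cmod \<beta> * C < N * e" by linarith
      then show ?thesis using N0 by (simp add: field_simps)
    qed
    obtain m n k :: int where m: "m > 0" and a1: "\<bar>of_int m * t1 - of_int n\<bar> < 1/N"
      and a2: "\<bar>of_int m * t2 - of_int k\<bar> < 1/N"
      using dirichlet2[OF N0] by blast
    define D where "D = of_int m * g - of_int n * g0 - of_int k * (2 * pi * \<i>)"
    have DG: "D \<in> G" and ED: "E D = of_int m * E g - of_int n * E g0"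
      using int_mult[OF g, of m] int_mult[OF g0, of n] int_mult[OF tp(1), of k] tp(2) sub
      unfolding D_def by (metis mult_zero_right diff_zero)+
    have ReD: "Re D = Re g0 * (of_int m * t1 - of_int n)"
      unfolding D_def using t1 by (simp add: algebra_simps)
    have ImD: "Im D = 2 * pi * (of_int m * t2 - of_int k) + Im g0 * (of_int m * t1 - of_int n)"
      unfolding D_def t2_def by (simp add: field_simps)
    have rD: "\<bar>Re D\<bar> \<le> \<bar>Re g0\<bar> / N"
      unfolding ReD abs_mult using a1 by (simp add: divide_inverse mult_left_mono)
    have iD: "\<bar>Im D\<bar> \<le> 2 * pi / N + \<bar>Im g0\<bar> / N"
    proof -
      have "\<bar>Im D\<bar> \<le> 2 * pi * \<bar>of_int m * t2 - of_int k\<bar> + \<bar>Im g0\<bar> * \<bar>of_int m * t1 - of_int n\<bar>"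
        unfolding ImD by (rule order.trans[OF abs_triangle_ineq]) (simp add: abs_mult)
      also have "\<dots> \<le> 2 * pi * (1/N) + \<bar>Im g0\<bar> * (1/N)"
        using a1 a2 by (intro add_mono mult_left_mono) (auto intro: less_imp_le)
      finally show ?thesis by simp
    qed
    have nD: "cmod D \<le> C / N"
    proof -
      have "cmod D \<le> \<bar>Re D\<bar> + \<bar>Im D\<bar>" by (rule cmod_le)
      also have "\<dots> \<le> (\<bar>Re g0\<bar> + 2 * pi + \<bar>Im g0\<bar>) / N" using rD iD by (simp add: add_divide_distrib)
      also have "\<dots> \<le> C / N" unfolding C_def using N0 by (simp add: divide_right_mono)
      finally show ?thesis .
    qed
    have ED_small: "cmod (E D) < e/2" using d DG nD NC1 by simp
    have key: "of_int m * (E g - \<beta> * of_real (Re g)) = E D - \<beta> * of_real (Re D)"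
    proof -
      have ReD': "Re D = of_int m * Re g - of_int n * Re g0" unfolding D_def by simp
      show ?thesis unfolding ED b ReD' by (simp add: algebra_simps)
    qed
    have "cmod (E D - \<beta> * of_real (Re D)) \<le> cmod (E D) + cmod \<beta> * \<bar>Re D\<bar>"
      by (metis norm_triangle_ineq4 norm_mult norm_of_real)
    also have "cmod \<beta> * \<bar>Re D\<bar> \<le> cmod \<beta> * (C / N)"
      using rD C_def N0 by (intro mult_left_mono) (auto simp: divide_right_mono intro: order.trans)
    finally have "cmod (E D - \<beta> * of_real (Re D)) \<le> cmod (E D) + cmod \<beta> * (C / N)" by simp
    then have "cmod (E D - \<beta> * of_real (Re D)) < e" using ED_small NC2 by linarith
    then have "cmod (of_int m * (E g - \<beta> * of_real (Re g))) < e" using key by simp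
    moreover have "cmod (E g - \<beta> * of_real (Re g)) \<le> cmod (of_int m * (E g - \<beta> * of_real (Re g)))"
      using m by (simp add: norm_mult mult_le_cancel_right1 of_int_abs[symmetric] del: of_int_abs)
    ultimately show ?thesis by linarith
  qed
  then have "cmod (E g - \<beta> * of_real (Re g)) = 0"
    by (metis norm_ge_zero order_less_irrefl order_le_less)
  then show ?thesis by simp
qed

theorem linear_E:
  shows "\<exists>\<beta>. \<forall>a\<in>G. E a = \<beta> * of_real (Re a)"
proof (cases "\<exists>g0\<in>G. Re g0 \<noteq> 0")
  case True
  then obtain g0 where g0: "g0 \<in> G" "Re g0 \<noteq> 0" by blast
  define \<beta> where "\<beta> = E g0 / of_real (Re g0)"
  have b: "E g0 = \<beta> * of_real (Re g0)" using g0 by (simp add: \<beta>_def)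
  show ?thesis
  proof (intro exI ballI)
    fix a assume a: "a \<in> G"
    show "E a = \<beta> * of_real (Re a)"
      by (rule approx_step[OF a g0(1) _ b, of "Re a / Re g0"]) (use g0 in simp)
  qed
next
  case False
  show ?thesis
  proof (intro exI ballI)
    fix a assume a: "a \<in> G"
    have "Re a = 0" using False a by blast
    have "E 0 = 0 * of_real (Re 0)" using zero by simp
    then show "E a = 0 * of_real (Re a)"
      using approx_step[OF a zero(1), of 0 0] \<open>Re a = 0\<close> by simp
  qed
qed

end


definition coord :: "(complex^2) set \<Rightarrow> complex" where "coord L = (SOME w. L = pt w)"

lemma coord_pt[simp]: "coord (pt w) = w"
  unfolding coord_def using pt_inj by simp

lemma pt_cont: "continuous_map euclidean CP1_top pt"
  unfolding continuous_map_def
proof (intro conjI allI impI)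
  show "pt \<in> topspace euclidean \<rightarrow> topspace CP1_top" by simp
  fix U assume U: "openin CP1_top U"
  have "open {z\<in>UNIV. cproj (vec2 z 1) \<in> U}"
    by (rule open_preimage_CP1[OF U]) (auto intro!: continuous_intros simp: vec2_zero_iff)
  then show "openin euclidean {x \<in> topspace euclidean. pt x \<in> U}" by (simp add: pt_def)
qed

lemma coord_cont: "continuous_map (subtopology CP1_top (CP1 - {inf_pt})) euclidean coord"
  unfolding continuous_map_def
proof (intro conjI allI impI)
  show "coord \<in> topspace (subtopology CP1_top (CP1 - {inf_pt})) \<rightarrow> topspace euclidean" by simp
  fix V :: "complex set" assume V: "openin euclidean V"
  define W where "W = {L\<in>CP1. L \<noteq> inf_pt \<and> coord L \<in> V}"
  have "{v. v \<noteq> 0 \<and> cproj v \<in> W} = {v\<in>{v. v$2 \<noteq> 0}. (\<lambda>v. v$1/v$2) v \<in> V}"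
  proof -
    have "v \<noteq> 0 \<and> cproj v \<in> W \<longleftrightarrow> v$2 \<noteq> 0 \<and> v$1/v$2 \<in> V" for v :: "complex^2"
    proof
      assume a: "v \<noteq> 0 \<and> cproj v \<in> W"
      then show "v$2 \<noteq> 0 \<and> v$1/v$2 \<in> V" using cproj_cases[of v] by (auto simp: W_def split: if_splits)
    next
      assume a: "v$2 \<noteq> 0 \<and> v$1/v$2 \<in> V"
      then have "v \<noteq> 0" by auto
      then show "v \<noteq> 0 \<and> cproj v \<in> W" using a cproj_cases[of v] by (auto simp: W_def)
    qed
    then show ?thesis by auto
  qed
  moreover have "open {v\<in>{v. v$2 \<noteq> 0}. (\<lambda>v::complex^2. v$1/v$2) v \<in> V}"
  proof -
    have "continuous_on {v. v$2 \<noteq> 0} (\<lambda>v::complex^2. v$1/v$2)" by (intro continuous_intros) auto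
    then have "open ((\<lambda>v::complex^2. v$1/v$2) -` V \<inter> {v. v$2 \<noteq> 0})"
      using continuous_on_open_vimage[OF open_neq_comp] V by auto
    then show ?thesis by (simp add: Int_commute Collect_conj_eq vimage_def)
  qed
  ultimately have "openin CP1_top W" by (simp add: openin_CP1 W_def)
  moreover have "{x \<in> topspace (subtopology CP1_top (CP1 - {inf_pt})). coord x \<in> V} = W \<inter> (CP1 - {inf_pt})"
    by (auto simp: W_def)
  ultimately show "openin (subtopology CP1_top (CP1 - {inf_pt})) {x \<in> topspace (subtopology CP1_top (CP1 - {inf_pt})). coord x \<in> V}"
    by (auto simp: openin_subtopology)
qed

lemma h_cont:
  assumes "continuous_map CP1_top CP1_top g" "\<And>z. z \<in> S \<Longrightarrow> g (pt z) \<noteq> inf_pt"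
  shows "continuous_on S (coord \<circ> g \<circ> pt)"
proof -
  have "continuous_map (top_of_set S) CP1_top (g \<circ> pt)"
    by (rule continuous_map_compose[OF continuous_map_from_subtopology[OF pt_cont] assms(1)])
  moreover have "(g \<circ> pt) \<in> topspace (top_of_set S) \<rightarrow> CP1 - {inf_pt}"
    using assms(1,2) unfolding continuous_map_def by auto
  ultimately have "continuous_map (top_of_set S) (subtopology CP1_top (CP1 - {inf_pt})) (g \<circ> pt)"
    by (rule continuous_map_into_subtopology)
  then have "continuous_map (top_of_set S) euclidean (coord \<circ> (g \<circ> pt))"
    by (rule continuous_map_compose[OF _ coord_cont])
  then show ?thesis by (simp add: o_assoc)
qed

lemma const2pi:
  fixes \<phi> :: "complex \<Rightarrow> complex"
  assumes "continuous_on UNIV \<phi>" "\<And>w. exp (\<phi> w) = 1"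
  shows "\<phi> w = \<phi> 0"
proof -
  have "\<phi> constant_on UNIV"
  proof (rule continuous_discrete_range_constant[OF connected_UNIV assms(1)])
    fix x :: complex
    show "\<exists>e>0. \<forall>y. y \<in> UNIV \<and> \<phi> y \<noteq> \<phi> x \<longrightarrow> e \<le> cmod (\<phi> y - \<phi> x)"
    proof (intro exI[of _ "2*pi"] conjI allI impI)
      show "0 < 2 * pi" by simp
      fix y assume y: "y \<in> UNIV \<and> \<phi> y \<noteq> \<phi> x"
      obtain m :: int where m: "Re (\<phi> x) = 0" "Im (\<phi> x) = of_int (2*m) * pi" using assms(2)[of x] exp_eq_1 by blast
      obtain n :: int where n: "Re (\<phi> y) = 0" "Im (\<phi> y) = of_int (2*n) * pi" using assms(2)[of y] exp_eq_1 by blast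
      have "n \<noteq> m" using y m n by (metis complex_eq_iff)
      then have "1 \<le> \<bar>of_int n - of_int m :: real\<bar>" by (metis of_int_diff of_int_1_le_iff zero_less_abs_iff int_one_le_iff_zero_less eq_iff_diff_eq_0 of_int_abs)
      then have "2 * pi \<le> 2 * pi * \<bar>of_int n - of_int m\<bar>" by simp
      also have "\<dots> = \<bar>2 * pi * (of_int n - of_int m)\<bar>" by (simp add: abs_mult)
      also have "\<dots> = \<bar>Im (\<phi> y - \<phi> x)\<bar>" using m n by (simp add: algebra_simps)
      also have "\<dots> \<le> cmod (\<phi> y - \<phi> x)" by (rule abs_Im_le_cmod)
      finally show "2 * pi \<le> cmod (\<phi> y - \<phi> x)" .
    qed
  qed
  then show ?thesis by (simp add: constant_on_def) (metis)
qed

lemma translate_mem: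
  fixes H :: "complex \<Rightarrow> complex"
  assumes "continuous_on UNIV H" "\<And>w. exp (H (w + a)) = K * exp (H w)"
  shows "H (w + a) = H w + (H a - H 0)"
proof -
  define \<phi> where "\<phi> w = H (w + a) - H w - (H a - H 0)" for w
  have K: "K = exp (H a) / exp (H 0)" using assms(2)[of 0] by simp
  have "continuous_on UNIV \<phi>" unfolding \<phi>_def
    by (intro continuous_intros continuous_on_compose2[OF assms(1)]) auto
  moreover have "exp (\<phi> w) = 1" for w
    by (simp add: \<phi>_def exp_diff assms(2) K)
  ultimately have "\<phi> w = \<phi> 0" by (rule const2pi)
  then have "H (w + a) - H w = H a - H 0" by (simp add: \<phi>_def)
  then show ?thesis by (metis add.commute diff_add_cancel)
qed

lemma iterate_int:
  fixes F :: "complex \<Rightarrow> complex"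
  assumes "\<And>w. F (w + a) = F w + b"
  shows "F (w + of_int k * a) = F w + of_int k * b"
proof -
  have nat: "F (w + of_nat n * a) = F w + of_nat n * b" for n w
  proof (induction n arbitrary: w)
    case (Suc n)
    have "F (w + of_nat (Suc n) * a) = F ((w + of_nat n * a) + a)" by (simp add: algebra_simps)
    also have "\<dots> = F (w + of_nat n * a) + b" by (rule assms)
    also have "\<dots> = F w + of_nat n * b + b" using Suc.IH by simp
    finally show ?case by (simp add: algebra_simps)
  qed simp
  show ?thesis
  proof (cases "k \<ge> 0")
    case True
    then have "of_int k = (of_nat (nat k) :: complex)" by simp
    then show ?thesis using nat[of w "nat k"] by simp
  next
    case False
    define n where "n = nat (- k)"
    have k: "of_int k = - (of_nat n :: complex)" using False by (simp add: n_def)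
    have "F w = F ((w - of_nat n * a) + of_nat n * a)" by simp
    also have "\<dots> = F (w - of_nat n * a) + of_nat n * b" by (rule nat)
    finally show ?thesis unfolding k by (simp add: algebra_simps)
  qed
qed


lemma lift_setup:
  assumes g: "homeomorphic_map CP1_top CP1_top g" and g0: "g (pt 0) = pt 0" and ginf: "g inf_pt = inf_pt"
  obtains g' where "homeomorphic_maps CP1_top CP1_top g g'"
    "continuous_on (-{0}) (coord \<circ> g \<circ> pt)" "continuous_on (-{0}) (coord \<circ> g' \<circ> pt)"
    "\<And>z. z \<noteq> 0 \<Longrightarrow> g (pt z) = pt ((coord \<circ> g \<circ> pt) z) \<and> (coord \<circ> g \<circ> pt) z \<noteq> 0"
    "\<And>z. z \<noteq> 0 \<Longrightarrow> g' (pt z) = pt ((coord \<circ> g' \<circ> pt) z) \<and> (coord \<circ> g' \<circ> pt) z \<noteq> 0"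
    "\<And>z. z \<noteq> 0 \<Longrightarrow> (coord \<circ> g \<circ> pt) ((coord \<circ> g' \<circ> pt) z) = z"
    "\<And>z. z \<noteq> 0 \<Longrightarrow> (coord \<circ> g' \<circ> pt) ((coord \<circ> g \<circ> pt) z) = z"
proof -
  obtain g' where m: "homeomorphic_maps CP1_top CP1_top g g'" using g homeomorphic_map_maps by blast
  have cg: "continuous_map CP1_top CP1_top g" and cg': "continuous_map CP1_top CP1_top g'"
    and gg': "\<And>x. x \<in> CP1 \<Longrightarrow> g' (g x) = x" and g'g: "\<And>x. x \<in> CP1 \<Longrightarrow> g (g' x) = x"
    using m unfolding homeomorphic_maps_def by auto
  have gC: "\<And>x. x \<in> CP1 \<Longrightarrow> g x \<in> CP1" and g'C: "\<And>x. x \<in> CP1 \<Longrightarrow> g' x \<in> CP1"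
    using continuous_map_image_subset_topspace[OF cg] continuous_map_image_subset_topspace[OF cg'] by auto
  have g'0: "g' (pt 0) = pt 0" using gg'[of "pt 0"] g0 by simp
  have g'inf: "g' inf_pt = inf_pt" using gg'[of inf_pt] ginf by simp
  have gen: "\<And>z. z \<noteq> 0 \<Longrightarrow> G (pt z) = pt ((coord \<circ> G \<circ> pt) z) \<and> (coord \<circ> G \<circ> pt) z \<noteq> 0"
    if GC: "\<And>x. x \<in> CP1 \<Longrightarrow> G x \<in> CP1" and inj: "\<And>x y. x \<in> CP1 \<Longrightarrow> y \<in> CP1 \<Longrightarrow> G x = G y \<Longrightarrow> x = y"
      and G0: "G (pt 0) = pt 0" and Ginf: "G inf_pt = inf_pt" for G
  proof -
    fix z :: complex assume z: "z \<noteq> 0"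
    have "G (pt z) \<noteq> inf_pt" using inj[of "pt z" inf_pt] Ginf by auto
    then obtain w where w: "G (pt z) = pt w" using CP1_cases GC[of "pt z"] by auto
    have "w \<noteq> 0" using inj[of "pt z" "pt 0"] G0 w z by (auto simp: pt_inj)
    then show "G (pt z) = pt ((coord \<circ> G \<circ> pt) z) \<and> (coord \<circ> G \<circ> pt) z \<noteq> 0" using w by simp
  qed
  have injg: "\<And>x y. x \<in> CP1 \<Longrightarrow> y \<in> CP1 \<Longrightarrow> g x = g y \<Longrightarrow> x = y"
  proof -
    fix x y assume xy: "x \<in> CP1" "y \<in> CP1" "g x = g y"
    have "x = g' (g x)" using gg'[OF xy(1)] by (rule sym)
    also have "\<dots> = g' (g y)" using xy(3) by (rule arg_cong)
    also have "\<dots> = y" by (rule gg'[OF xy(2)])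
    finally show "x = y" .
  qed
  have injg': "\<And>x y. x \<in> CP1 \<Longrightarrow> y \<in> CP1 \<Longrightarrow> g' x = g' y \<Longrightarrow> x = y"
  proof -
    fix x y assume xy: "x \<in> CP1" "y \<in> CP1" "g' x = g' y"
    have "x = g (g' x)" using g'g[OF xy(1)] by (rule sym)
    also have "\<dots> = g (g' y)" using xy(3) by (rule arg_cong)
    also have "\<dots> = y" by (rule g'g[OF xy(2)])
    finally show "x = y" .
  qed
  have hg: "\<And>z. z \<noteq> 0 \<Longrightarrow> g (pt z) = pt ((coord \<circ> g \<circ> pt) z) \<and> (coord \<circ> g \<circ> pt) z \<noteq> 0"
    by (rule gen[OF gC injg g0 ginf])
  have hg': "\<And>z. z \<noteq> 0 \<Longrightarrow> g' (pt z) = pt ((coord \<circ> g' \<circ> pt) z) \<and> (coord \<circ> g' \<circ> pt) z \<noteq> 0"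
    by (rule gen[OF g'C injg' g'0 g'inf])
  show ?thesis
  proof (rule that[OF m])
    show "continuous_on (-{0}) (coord \<circ> g \<circ> pt)"
    proof (rule h_cont[OF cg])
      fix z :: complex assume "z \<in> -{0}"
      then have "z \<noteq> 0" by simp
      from conjunct1[OF hg[OF this]] show "g (pt z) \<noteq> inf_pt" by (metis pt_ne_inf(1))
    qed
    show "continuous_on (-{0}) (coord \<circ> g' \<circ> pt)"
    proof (rule h_cont[OF cg'])
      fix z :: complex assume "z \<in> -{0}"
      then have "z \<noteq> 0" by simp
      from conjunct1[OF hg'[OF this]] show "g' (pt z) \<noteq> inf_pt" by (metis pt_ne_inf(1))
    qed
    show "\<And>z. z \<noteq> 0 \<Longrightarrow> g (pt z) = pt ((coord \<circ> g \<circ> pt) z) \<and> (coord \<circ> g \<circ> pt) z \<noteq> 0" by (rule hg)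
    show "\<And>z. z \<noteq> 0 \<Longrightarrow> g' (pt z) = pt ((coord \<circ> g' \<circ> pt) z) \<and> (coord \<circ> g' \<circ> pt) z \<noteq> 0" by (rule hg')
    fix z :: complex assume z: "z \<noteq> 0"
    show "(coord \<circ> g \<circ> pt) ((coord \<circ> g' \<circ> pt) z) = z"
    proof -
      define w where "w = (coord \<circ> g' \<circ> pt) z"
      have w: "w \<noteq> 0" "g' (pt z) = pt w" using hg'[OF z] by (auto simp: w_def)
      have "pt ((coord \<circ> g \<circ> pt) w) = g (pt w)" using hg[OF w(1)] by simp
      also have "\<dots> = pt z" using g'g[of "pt z"] w(2) by simp
      finally show ?thesis unfolding w_def pt_inj .
    qed
    show "(coord \<circ> g' \<circ> pt) ((coord \<circ> g \<circ> pt) z) = z"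
    proof -
      define w where "w = (coord \<circ> g \<circ> pt) z"
      have w: "w \<noteq> 0" "g (pt z) = pt w" using hg[OF z] by (auto simp: w_def)
      have "pt ((coord \<circ> g' \<circ> pt) w) = g' (pt w)" using hg'[OF w(1)] by simp
      also have "\<dots> = pt z" using gg'[of "pt z"] w(2) by simp
      finally show ?thesis unfolding w_def pt_inj .
    qed
  qed
qed

lemma lift_exp:
  fixes h :: "complex \<Rightarrow> complex"
  assumes "continuous_on (-{0}) h" "\<And>z. z \<noteq> 0 \<Longrightarrow> h z \<noteq> 0"
  obtains H where "continuous_on UNIV H" "\<And>w. h (exp w) = exp (H w)"
proof -
  have "continuous_on UNIV (\<lambda>w. h (exp w))"
    by (rule continuous_on_compose2[OF assms(1) continuous_on_exp[OF continuous_on_id]]) auto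
  then obtain H where "continuous_on UNIV H" "\<And>w. w \<in> UNIV \<Longrightarrow> h (exp w) = exp (H w)"
    using continuous_logarithm_on_contractible[of UNIV "\<lambda>w. h (exp w)"] assms(2) by auto
  then show ?thesis using that by blast
qed


lemma core:
  fixes h h' H H' :: "complex \<Rightarrow> complex" and lam mu :: "'i \<Rightarrow> complex"
  assumes Hc: "continuous_on UNIV H" and H'c: "continuous_on UNIV H'"
    and hH: "\<And>w. h (exp w) = exp (H w)" and hH': "\<And>w. h' (exp w) = exp (H' w)"
    and hnz: "\<And>z. z \<noteq> 0 \<Longrightarrow> h z \<noteq> 0 \<and> h' z \<noteq> 0 \<and> h (h' z) = z \<and> h' (h z) = z"
    and lam: "\<And>r. r \<in> I \<Longrightarrow> lam r \<noteq> 0 \<and> (\<forall>z. z \<noteq> 0 \<longrightarrow> h (lam r * z) = mu r * h z)"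
  shows "\<exists>\<beta> (d::real). Re \<beta> \<noteq> 0 \<and> (d = 1 \<or> d = -1) \<and>
           (\<forall>r\<in>I. mu r = exp (\<beta> * of_real (Re (Ln (lam r))) + \<i> * of_real d * of_real (Im (Ln (lam r)))))"
proof -
  define tp :: complex where "tp = 2 * of_real pi * \<i>"
  define \<psi> where "\<psi> a = H a - H 0" for a
  define \<psi>' where "\<psi>' a = H' a - H' 0" for a
  define \<Gamma> where "\<Gamma> = {a. \<forall>w. H (w + a) = H w + \<psi> a}"
  have exp_tp: "exp (w + tp) = exp w" for w by (simp add: tp_def exp_add)
  have tpG: "H (w + tp) = H w + \<psi> tp" for w
    unfolding \<psi>_def by (rule translate_mem[OF Hc, of _ 1]) (simp add: hH[symmetric] exp_tp)
  have tpG': "H' (w + tp) = H' w + \<psi>' tp" for w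
    unfolding \<psi>'_def by (rule translate_mem[OF H'c, of _ 1]) (simp add: hH'[symmetric] exp_tp)
  have int_of: "\<exists>n::int. x = of_int n * tp" if "exp x = 1" for x
  proof -
    have "Re x = 0 \<and> (\<exists>n::int. Im x = of_int (2 * n) * pi)" using that exp_eq_1 by simp
    then obtain n :: int where n: "Re x = 0" "Im x = of_int (2 * n) * pi" by blast
    then show ?thesis by (intro exI[of _ n]) (simp add: complex_eq_iff tp_def)
  qed
  have "exp (\<psi> tp) = 1" using tpG[of 0] hnz[of 1] by (simp add: \<psi>_def exp_diff hH[symmetric] tp_def)
  then obtain n :: int where n: "\<psi> tp = of_int n * tp" using int_of by blast
  have "exp (\<psi>' tp) = 1" using tpG'[of 0] hnz[of 1] by (simp add: \<psi>'_def exp_diff hH'[symmetric] tp_def)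
  then obtain n' :: int where n': "\<psi>' tp = of_int n' * tp" using int_of by blast
  have c0: "H' (H w) - w = H' (H 0) - 0" for w
  proof (rule const2pi)
    show "continuous_on UNIV (\<lambda>w. H' (H w) - w)"
      by (intro continuous_intros continuous_on_compose2[OF H'c Hc]) auto
    fix w
    have "exp (H' (H w)) = exp w" using hH'[of "H w"] hH[of w] hnz[of "exp w"] by simp
    then show "exp (H' (H w) - w) = 1" by (simp add: exp_diff)
  qed
  have "H' (H 0 + of_int n * tp) = H' (H 0) + of_int n * \<psi>' tp"
    by (rule iterate_int) (rule tpG')
  moreover have "H 0 + of_int n * tp = H tp" using tpG[of 0] n by simp
  moreover have "H' (H tp) = tp + H' (H 0)" using c0[of tp] by (simp add: diff_eq_eq add.commute)
  ultimately have "tp + H' (H 0) = H' (H 0) + of_int n * (of_int n' * tp)" using n' by simp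
  then have "of_int (n * n') * tp = 1 * tp" by (simp add: algebra_simps)
  then have "of_int (n * n') = (1::complex)" by (simp add: tp_def)
  then have "n * n' = 1" by (metis of_int_eq_1_iff)
  then have n1: "n = 1 \<or> n = -1" using zmult_eq_1_iff by blast
  define d :: real where "d = of_int n"
  have d1: "d = 1 \<or> d = -1" using n1 by (auto simp: d_def)
  define E where "E a = \<psi> a - \<i> * of_real d * of_real (Im a)" for a
  have \<psi>_add: "a \<in> \<Gamma> \<Longrightarrow> b \<in> \<Gamma> \<Longrightarrow> \<psi> (a + b) = \<psi> a + \<psi> b" for a b
    unfolding \<Gamma>_def by (simp add: \<psi>_def)
  interpret Gr: addgrp \<Gamma> E
  proof
    fix a b assume a: "a \<in> \<Gamma>" and b: "b \<in> \<Gamma>"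
    have "H (w + (a + b)) = H w + \<psi> (a + b)" for w
    proof -
      have "H (w + (a + b)) = H ((w + a) + b)" by (simp add: add.assoc)
      also have "\<dots> = H w + \<psi> a + \<psi> b" using a b unfolding \<Gamma>_def by simp
      finally show ?thesis using \<psi>_add[OF a b] by simp
    qed
    then show "a + b \<in> \<Gamma> \<and> E (a + b) = E a + E b"
      using \<psi>_add[OF a b] by (simp add: \<Gamma>_def E_def algebra_simps)
  next
    fix a assume a: "a \<in> \<Gamma>"
    have m: "H (w - a) = H w - \<psi> a" for w
    proof -
      have "H (w - a + a) = H (w - a) + \<psi> a" using a unfolding \<Gamma>_def by blast
      then have "H w = H (w - a) + \<psi> a" by simp
      then show ?thesis by (simp add: eq_diff_eq)
    qed
    have "\<psi> (- a) = - \<psi> a" using m[of 0] by (simp add: \<psi>_def)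
    then show "- a \<in> \<Gamma>" using m unfolding \<Gamma>_def by simp
  next
    show "2 * pi * \<i> \<in> \<Gamma>" using tpG unfolding \<Gamma>_def tp_def by simp
    show "E (2 * pi * \<i>) = 0" using n unfolding E_def d_def tp_def by simp
  next
    fix e :: real assume e: "e > 0"
    have "isCont H 0" using Hc by (simp add: continuous_on_eq_continuous_at)
    then have "\<forall>\<epsilon>>0. \<exists>\<delta>>0. \<forall>x'. dist x' 0 < \<delta> \<longrightarrow> dist (H x') (H 0) < \<epsilon>"
      by (simp only: continuous_at_eps_delta)
    then obtain s where s: "s > 0" "\<And>x. dist x 0 < s \<Longrightarrow> dist (H x) (H 0) < e/2"
      using e half_gt_zero by blast
    show "\<exists>d>0. \<forall>a\<in>\<Gamma>. cmod a < d \<longrightarrow> cmod (E a) < e"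
    proof (intro exI[of _ "min s (e/2)"] conjI ballI impI)
      show "min s (e/2) > 0" using s e by simp
      fix a assume "a \<in> \<Gamma>" "cmod a < min s (e/2)"
      then have a1: "cmod (\<psi> a) < e/2" and a2: "cmod a < e/2"
        using s(2)[of a] by (auto simp: \<psi>_def dist_norm)
      have "cmod (E a) \<le> cmod (\<psi> a) + cmod (\<i> * of_real d * of_real (Im a))"
        unfolding E_def by (rule norm_triangle_ineq4)
      also have "cmod (\<i> * of_real d * of_real (Im a)) = \<bar>Im a\<bar>"
        using d1 by (auto simp: norm_mult)
      also have "\<bar>Im a\<bar> \<le> cmod a" by (rule abs_Im_le_cmod)
      finally show "cmod (E a) < e" using a1 a2 by linarith
    qed
  qed
  obtain \<beta>0 where b0: "\<forall>a\<in>\<Gamma>. E a = \<beta>0 * of_real (Re a)" using Gr.linear_E by blast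
  have psiform: "\<psi> a = \<beta>0 * of_real (Re a) + \<i> * of_real d * of_real (Im a)" if "a \<in> \<Gamma>" for a
    using b0 that unfolding E_def by (metis diff_eq_eq)
  have tpG0: "tp \<in> \<Gamma>" using tpG unfolding \<Gamma>_def by simp
  have "\<exists>\<beta>. Re \<beta> \<noteq> 0 \<and> (\<forall>a\<in>\<Gamma>. \<psi> a = \<beta> * of_real (Re a) + \<i> * of_real d * of_real (Im a))"
  proof (cases "\<exists>g0\<in>\<Gamma>. Re g0 \<noteq> 0")
    case False
    show ?thesis
    proof (intro exI[of _ 1] conjI ballI)
      fix a assume a: "a \<in> \<Gamma>"
      then have "Re a = 0" using False by blast
      then show "\<psi> a = 1 * of_real (Re a) + \<i> * of_real d * of_real (Im a)" using psiform[OF a] by simp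
    qed simp
  next
    case True
    then obtain g0 where g0: "g0 \<in> \<Gamma>" "Re g0 \<noteq> 0" by blast
    have "Re \<beta>0 \<noteq> 0"
    proof
      assume rb: "Re \<beta>0 = 0"
      have ReH: "Re (H (w + a)) = Re (H w)" if a: "a \<in> \<Gamma>" for a w
      proof -
        have "H (w + a) = H w + \<psi> a" using a unfolding \<Gamma>_def by blast
        moreover have "Re (\<psi> a) = 0" using psiform[OF a] rb by simp
        ultimately show ?thesis by simp
      qed
      define R where "R = cmod g0 + 2 * pi"
      have "bounded (H ` cball 0 R)"
        by (intro compact_imp_bounded compact_continuous_image continuous_on_subset[OF Hc]) auto
      then obtain B where B: "\<forall>x\<in>cball 0 R. cmod (H x) \<le> B" by (auto simp: bounded_iff)
      have bound: "Re (H w) \<le> B" for w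
      proof -
        define s where "s = Re w / Re g0"
        define t where "t = (Im w - s * Im g0) / (2 * pi)"
        define a where "a = of_int \<lfloor>s\<rfloor> * g0 + of_int \<lfloor>t\<rfloor> * tp"
        define x where "x = of_real (frac s) * g0 + of_real (frac t) * tp"
        have aG: "a \<in> \<Gamma>" unfolding a_def
          using Gr.int_mult[OF g0(1), of "\<lfloor>s\<rfloor>"] Gr.int_mult[OF tpG0, of "\<lfloor>t\<rfloor>"] Gr.add by blast
        have rw: "Re w = s * Re g0" using g0(2) by (simp add: s_def)
        have iw: "Im w = s * Im g0 + t * (2 * pi)" by (simp add: t_def)
        have wx: "w = x + a"
          unfolding complex_eq_iff using rw iw by (simp add: x_def a_def tp_def frac_def algebra_simps)
        have xR: "cmod x \<le> R"
        proof -
          have "cmod x \<le> cmod (of_real (frac s) * g0) + cmod (of_real (frac t) * tp)"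
            unfolding x_def by (rule norm_triangle_ineq)
          also have "\<dots> = frac s * cmod g0 + frac t * (2 * pi)"
            by (simp add: norm_mult tp_def frac_ge_0)
          also have "\<dots> \<le> 1 * cmod g0 + 1 * (2 * pi)"
            by (intro add_mono mult_right_mono) (auto simp: frac_lt_1 less_imp_le)
          finally show ?thesis by (simp add: R_def)
        qed
        have "Re (H w) = Re (H x)" using ReH[OF aG, of x] wx by simp
        also have "\<dots> \<le> cmod (H x)" by (rule complex_Re_le_cmod)
        also have "\<dots> \<le> B" using B xR by simp
        finally show ?thesis .
      qed
      define z where "z = exp (of_real (B + 1) :: complex)"
      have z0: "z \<noteq> 0" by (simp add: z_def)
      have hz: "h' z \<noteq> 0" "h (h' z) = z" using hnz[OF z0] by auto
      define w0 where "w0 = Ln (h' z)"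
      have "exp w0 = h' z" using hz(1) by (simp add: w0_def)
      then have "exp (H w0) = z" using hH[of w0] hz(2) by simp
      then have "cmod (exp (H w0)) = cmod z" by simp
      then have "exp (Re (H w0)) = exp (B + 1)" by (simp add: z_def)
      then have "Re (H w0) = B + 1" by simp
      with bound[of w0] show False by simp
    qed
    then show ?thesis using psiform by blast
  qed
  then obtain \<beta> where \<beta>: "Re \<beta> \<noteq> 0" "\<forall>a\<in>\<Gamma>. \<psi> a = \<beta> * of_real (Re a) + \<i> * of_real d * of_real (Im a)"
    by blast
  show ?thesis
  proof (intro exI[of _ \<beta>] exI[of _ d] conjI ballI)
    show "Re \<beta> \<noteq> 0" by (rule \<beta>(1))
    show "d = 1 \<or> d = -1" by (rule d1)
    fix r assume r: "r \<in> I"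
    define l where "l = Ln (lam r)"
    have lr: "lam r \<noteq> 0" "\<And>z. z \<noteq> 0 \<Longrightarrow> h (lam r * z) = mu r * h z" using lam[OF r] by auto
    have el: "exp l = lam r" using lr by (simp add: l_def)
    have lG: "l \<in> \<Gamma>"
    proof -
      have "H (w + l) = H w + (H l - H 0)" for w
      proof (rule translate_mem[OF Hc])
        fix w
        have "exp (H (w + l)) = h (exp (w + l))" by (simp add: hH)
        also have "exp (w + l) = lam r * exp w" by (simp add: exp_add el mult.commute)
        also have "h (lam r * exp w) = mu r * h (exp w)" using lr(2)[of "exp w"] by simp
        finally show "exp (H (w + l)) = mu r * exp (H w)" by (simp add: hH)
      qed
      then show ?thesis unfolding \<Gamma>_def \<psi>_def by blast
    qed
    have "exp (\<psi> l) = exp (H l) / exp (H 0)" by (simp add: \<psi>_def exp_diff)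
    also have "\<dots> = h (lam r * 1) / h 1" by (simp add: hH[symmetric] el)
    also have "\<dots> = mu r" using lr(2)[of 1] hnz[of 1] by simp
    finally have "mu r = exp (\<psi> l)" by simp
    then show "mu r = exp (\<beta> * of_real (Re (Ln (lam r))) + \<i> * of_real d * of_real (Im (Ln (lam r))))"
      using \<beta>(2) lG by (simp add: l_def)
  qed
qed


lemma convert:
  assumes "l \<noteq> 0" "d = 1 \<or> d = -1"
  shows "exp (\<beta> * of_real (Re (Ln l)) + \<i> * of_real d * of_real (Im (Ln l)))
         = (if d = -1 then cnj l else l) * cpowr (cmod l) (\<beta> - 1)"
proof -
  define L where "L = Ln l"
  have el: "exp L = l" using assms(1) by (simp add: L_def)
  have rl: "ln (cmod l) = Re L" using assms(1) by (simp add: L_def)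
  have "(if d = -1 then cnj l else l) = exp (of_real (Re L) + \<i> * of_real d * of_real (Im L))"
    using assms(2)
  proof
    assume "d = 1"
    then show ?thesis using el by (simp add: complex_eq_iff[of L, symmetric] cong: if_cong)
      (metis complex_eq)
  next
    assume d: "d = -1"
    have "cnj l = exp (cnj L)" using el exp_cnj[of L] by simp
    also have "cnj L = of_real (Re L) + \<i> * of_real d * of_real (Im L)" using d by (simp add: complex_eq_iff)
    finally show ?thesis using d by simp
  qed
  then have "(if d = -1 then cnj l else l) * cpowr (cmod l) (\<beta> - 1)
      = exp (of_real (Re L) + \<i> * of_real d * of_real (Im L) + (\<beta> - 1) * of_real (Re L))"
    by (simp add: cpowr_def rl exp_add)
  also have "of_real (Re L) + \<i> * of_real d * of_real (Im L) + (\<beta> - 1) * of_real (Re L)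
      = \<beta> * of_real (Re L) + \<i> * of_real d * of_real (Im L)" by (simp add: algebra_simps)
  finally show ?thesis by (simp add: L_def)
qed

lemma fix_diag:
  assumes "a \<noteq> b" "a \<noteq> 0" "b \<noteq> 0" "L \<in> CP1" "pact (diag2 a b) L = L"
  shows "L = pt 0 \<or> L = inf_pt"
proof -
  { fix z assume L: "L = pt z"
    then have "pt (a / b * z) = pt z" using assms(3,5) pact_diag_pt by simp
    then have "a / b * z = z" by (simp add: pt_inj)
    moreover have "a / b \<noteq> 1" using assms(1,3) by simp
    ultimately have "z = 0" by (metis mult_cancel_right2)
    then have ?thesis using L by simp }
  then show ?thesis using CP1_cases[OF assms(4)] by blast
qed

lemma Jm_mv: "Jm *v vec2 x y = vec2 y x"
  unfolding vec_eq_iff forall_2 matrix_vector_mult_def sum_2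
  by (simp add: Jm_def)

lemma Jm_pts: "pact Jm inf_pt = pt 0" "pact Jm (pt 0) = inf_pt"
proof -
  show "pact Jm inf_pt = pt 0"
  proof -
    have "pact Jm inf_pt = cproj (vec2 0 1)" by (simp add: inf_pt_def pact_cproj Jm_mv)
    also have "\<dots> = pt 0" using cproj_vec2_fin[of 1 0] by simp
    finally show ?thesis .
  qed
  show "pact Jm (pt 0) = inf_pt"
  proof -
    have "pact Jm (pt 0) = cproj (vec2 1 0)" by (simp add: pt_def pact_cproj Jm_mv)
    also have "\<dots> = inf_pt" by (simp add: inf_pt_def)
    finally show ?thesis .
  qed
qed

lemma forward_fixed:
  fixes p1 p2 q1 q2 :: "'i \<Rightarrow> complex"
  assumes g: "homeomorphic_map CP1_top CP1_top g"
    and conj: "\<forall>r\<in>I. \<forall>v\<in>CP1. g (pact (diag2 (p1 r) (p2 r)) v) = pact (diag2 (q1 r) (q2 r)) (g v)"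
    and nz: "\<forall>r\<in>I. p1 r \<noteq> 0 \<and> p2 r \<noteq> 0 \<and> q1 r \<noteq> 0 \<and> q2 r \<noteq> 0"
    and g0: "g (pt 0) = pt 0" and ginf: "g inf_pt = inf_pt"
  shows "\<exists>\<alpha> c. Re \<alpha> \<noteq> -1 \<and> (\<forall>r\<in>I. q1 r / q2 r = (if c then cnj (p1 r / p2 r) else p1 r / p2 r) * cpowr (cmod (p1 r / p2 r)) \<alpha>)"
proof -
  show ?thesis
  proof (rule lift_setup[OF g g0 ginf])
  fix g' assume
    m: "homeomorphic_maps CP1_top CP1_top g g'" and
    hc: "continuous_on (-{0}) (coord \<circ> g \<circ> pt)" and h'c: "continuous_on (-{0}) (coord \<circ> g' \<circ> pt)" and
    hg: "\<And>z. z \<noteq> 0 \<Longrightarrow> g (pt z) = pt ((coord \<circ> g \<circ> pt) z) \<and> (coord \<circ> g \<circ> pt) z \<noteq> 0" and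
    hg': "\<And>z. z \<noteq> 0 \<Longrightarrow> g' (pt z) = pt ((coord \<circ> g' \<circ> pt) z) \<and> (coord \<circ> g' \<circ> pt) z \<noteq> 0" and
    i1: "\<And>z. z \<noteq> 0 \<Longrightarrow> (coord \<circ> g \<circ> pt) ((coord \<circ> g' \<circ> pt) z) = z" and
    i2: "\<And>z. z \<noteq> 0 \<Longrightarrow> (coord \<circ> g' \<circ> pt) ((coord \<circ> g \<circ> pt) z) = z"
  define h where "h = coord \<circ> g \<circ> pt"
  define h' where "h' = coord \<circ> g' \<circ> pt"
  obtain H where H: "continuous_on UNIV H" "\<And>w. h (exp w) = exp (H w)"
  proof (rule lift_exp[of h])
    show "continuous_on (-{0}) h" using hc by (simp only: h_def)
    show "\<And>z. z \<noteq> 0 \<Longrightarrow> h z \<noteq> 0" unfolding h_def using hg by blast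
  qed blast
  obtain H' where H': "continuous_on UNIV H'" "\<And>w. h' (exp w) = exp (H' w)"
  proof (rule lift_exp[of h'])
    show "continuous_on (-{0}) h'" using h'c by (simp only: h'_def)
    show "\<And>z. z \<noteq> 0 \<Longrightarrow> h' z \<noteq> 0" unfolding h'_def using hg' by blast
  qed blast
  have "\<exists>\<beta> (d::real). Re \<beta> \<noteq> 0 \<and> (d = 1 \<or> d = -1) \<and>
           (\<forall>r\<in>I. q1 r / q2 r = exp (\<beta> * of_real (Re (Ln (p1 r / p2 r))) + \<i> * of_real d * of_real (Im (Ln (p1 r / p2 r)))))"
  proof (rule core[OF H(1) H'(1) H(2) H'(2)])
    fix z :: complex assume z: "z \<noteq> 0"
    show "h z \<noteq> 0 \<and> h' z \<noteq> 0 \<and> h (h' z) = z \<and> h' (h z) = z"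
      using hg[OF z] hg'[OF z] i1[OF z] i2[OF z] unfolding h_def h'_def by blast
  next
    fix r assume r: "r \<in> I"
    have p: "p1 r \<noteq> 0" "p2 r \<noteq> 0" "q2 r \<noteq> 0" using nz r by auto
    show "p1 r / p2 r \<noteq> 0 \<and> (\<forall>z. z \<noteq> 0 \<longrightarrow> h (p1 r / p2 r * z) = q1 r / q2 r * h z)"
    proof (intro conjI allI impI)
      show "p1 r / p2 r \<noteq> 0" using p by simp
      fix z :: complex assume z: "z \<noteq> 0"
      have lz: "p1 r / p2 r * z \<noteq> 0" using p z by simp
      have "pt (h (p1 r / p2 r * z)) = g (pt (p1 r / p2 r * z))" unfolding h_def using conjunct1[OF hg[OF lz]] by (rule sym)
      also have "\<dots> = g (pact (diag2 (p1 r) (p2 r)) (pt z))" using pact_diag_pt[OF p(2)] by simp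
      also have "\<dots> = pact (diag2 (q1 r) (q2 r)) (g (pt z))" using conj r by simp
      also have "g (pt z) = pt (h z)" unfolding h_def using conjunct1[OF hg[OF z]] .
      also have "pact (diag2 (q1 r) (q2 r)) (pt (h z)) = pt (q1 r / q2 r * h z)" using pact_diag_pt[OF p(3)] by simp
      finally show "h (p1 r / p2 r * z) = q1 r / q2 r * h z" by (simp add: pt_inj)
    qed
  qed
  then obtain \<beta> and d :: real where bd: "Re \<beta> \<noteq> 0" "d = 1 \<or> d = -1"
    "\<forall>r\<in>I. q1 r / q2 r = exp (\<beta> * of_real (Re (Ln (p1 r / p2 r))) + \<i> * of_real d * of_real (Im (Ln (p1 r / p2 r))))"
    by blast
  show ?thesis
  proof (intro exI[of _ "\<beta> - 1"] exI[of _ "d = -1"] conjI ballI)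
    show "Re (\<beta> - 1) \<noteq> -1" using bd(1) by simp
    fix r assume r: "r \<in> I"
    have "p1 r / p2 r \<noteq> 0" using nz r by simp
    then show "q1 r / q2 r = (if d = -1 then cnj (p1 r / p2 r) else p1 r / p2 r) * cpowr (cmod (p1 r / p2 r)) (\<beta> - 1)"
      using bd(3) r convert[OF _ bd(2)] by simp
  qed
qed
qed

lemma diag_id: "a = b \<Longrightarrow> b \<noteq> 0 \<Longrightarrow> L \<in> CP1 \<Longrightarrow> pact (diag2 a b) L = L"
  using CP1_cases[of L] by (auto simp: pact_diag_pt pact_diag_inf)

lemma forward_diag:
  fixes p1 p2 q1 q2 :: "'i \<Rightarrow> complex"
  assumes g: "homeomorphic_map CP1_top CP1_top g"
    and conj: "\<forall>r\<in>I. \<forall>v\<in>CP1. g (pact (diag2 (p1 r) (p2 r)) v) = pact (diag2 (q1 r) (q2 r)) (g v)"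
    and nz: "\<forall>r\<in>I. p1 r \<noteq> 0 \<and> p2 r \<noteq> 0 \<and> q1 r \<noteq> 0 \<and> q2 r \<noteq> 0"
  shows "\<exists>\<alpha> c. Re \<alpha> \<noteq> -1 \<and> (\<forall>r\<in>I. q1 r / q2 r = (if c then cnj (p1 r / p2 r) else p1 r / p2 r) * cpowr (cmod (p1 r / p2 r)) \<alpha>)"
proof -
  have surj: "g ` CP1 = CP1" using homeomorphic_imp_surjective_map[OF g] by simp
  have inj: "inj_on g CP1" using g by (simp add: homeomorphic_map_def)
  have gC: "g v \<in> CP1" if "v \<in> CP1" for v using surj that by blast
  show ?thesis
  proof (cases "\<forall>r\<in>I. p1 r = p2 r")
    case True
    have q: "q1 r / q2 r = 1" if r: "r \<in> I" for r
    proof -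
      obtain v where v: "v \<in> CP1" "g v = pt 1" using surj pt_CP1[of 1] by (metis imageE)
      have "pt (q1 r / q2 r * 1) = pact (diag2 (q1 r) (q2 r)) (g v)" using v nz r pact_diag_pt by simp
      also have "\<dots> = g (pact (diag2 (p1 r) (p2 r)) v)" using conj r v by simp
      also have "pact (diag2 (p1 r) (p2 r)) v = v" using diag_id True r nz v by blast
      finally show ?thesis using v by (simp add: pt_inj)
    qed
    show ?thesis
    proof (intro exI[of _ 0] exI[of _ False] conjI ballI)
      fix r assume r: "r \<in> I"
      then show "q1 r / q2 r = (if False then cnj (p1 r / p2 r) else p1 r / p2 r) * cpowr (cmod (p1 r / p2 r)) 0"
        using q[OF r] True nz by simp
    qed simp
  next
    case False
    then obtain r0 where r0: "r0 \<in> I" "p1 r0 \<noteq> p2 r0" by blast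
    have nz0: "p1 r0 \<noteq> 0" "p2 r0 \<noteq> 0" "q1 r0 \<noteq> 0" "q2 r0 \<noteq> 0" using nz r0 by auto
    have qne: "q1 r0 \<noteq> q2 r0"
    proof
      assume e: "q1 r0 = q2 r0"
      have "g (pact (diag2 (p1 r0) (p2 r0)) (pt 1)) = pact (diag2 (q1 r0) (q2 r0)) (g (pt 1))"
        using conj r0 by simp
      also have "\<dots> = g (pt 1)" using diag_id[OF e nz0(4) gC[OF pt_CP1]] .
      finally have "pact (diag2 (p1 r0) (p2 r0)) (pt 1) = pt 1"
        using inj pact_CP1 by (metis inj_onD pt_CP1 pact_diag_pt nz0(2))
      then have "p1 r0 / p2 r0 = 1" using pact_diag_pt[OF nz0(2)] by (simp add: pt_inj)
      then show False using r0(2) nz0 by simp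
    qed
    have fixq: "L \<in> CP1 \<Longrightarrow> pact (diag2 (q1 r0) (q2 r0)) L = L \<Longrightarrow> L = pt 0 \<or> L = inf_pt" for L
      using fix_diag[OF qne nz0(3,4)] by blast
    have "pact (diag2 (q1 r0) (q2 r0)) (g (pt 0)) = g (pt 0)"
      using conj r0 pact_diag_pt[OF nz0(2), of _ 0] by (metis pt_CP1 mult_zero_right)
    then have A: "g (pt 0) = pt 0 \<or> g (pt 0) = inf_pt" using fixq gC pt_CP1 by blast
    have "pact (diag2 (q1 r0) (q2 r0)) (g inf_pt) = g inf_pt"
      using conj r0 pact_diag_inf[OF nz0(1)] by (metis inf_CP1)
    then have B: "g inf_pt = pt 0 \<or> g inf_pt = inf_pt" using fixq gC inf_CP1 by blast
    have ne: "g (pt 0) \<noteq> g inf_pt" using inj by (metis inj_onD pt_CP1 inf_CP1 pt_ne_inf(1))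
    show ?thesis
    proof (cases "g (pt 0) = pt 0")
      case True
      then have "g inf_pt = inf_pt" using B ne by auto
      then show ?thesis using forward_fixed[OF g conj nz True] by blast
    next
      case F: False
      then have g0: "g (pt 0) = inf_pt" and ginf: "g inf_pt = pt 0" using A B ne by auto
      define g2 where "g2 = pact Jm \<circ> g"
      have hg2: "homeomorphic_map CP1_top CP1_top g2"
        unfolding g2_def using homeomorphic_map_compose[OF g pact_homeo[OF Jm_inv]] by blast
      have conj2: "\<forall>r\<in>I. \<forall>v\<in>CP1. g2 (pact (diag2 (p1 r) (p2 r)) v) = pact (diag2 (q2 r) (q1 r)) (g2 v)"
        using conj by (simp add: g2_def pact_Jm_diag)
      have nz2: "\<forall>r\<in>I. p1 r \<noteq> 0 \<and> p2 r \<noteq> 0 \<and> q2 r \<noteq> 0 \<and> q1 r \<noteq> 0" using nz by auto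
      obtain \<alpha> c where ac: "Re \<alpha> \<noteq> -1"
        "\<forall>r\<in>I. q2 r / q1 r = (if c then cnj (p1 r / p2 r) else p1 r / p2 r) * cpowr (cmod (p1 r / p2 r)) \<alpha>"
        using forward_fixed[OF hg2 conj2 nz2] by (auto simp: g2_def g0 ginf Jm_pts)
      show ?thesis
      proof (intro exI[of _ "- \<alpha> - 2"] exI[of _ "\<not> c"] conjI ballI)
        show "Re (- \<alpha> - 2) \<noteq> -1" using ac(1) by simp
        fix r assume r: "r \<in> I"
        define l where "l = p1 r / p2 r"
        have l: "l \<noteq> 0" using nz r by (simp add: l_def)
        have qq: "q2 r / q1 r = (if c then cnj l else l) * cpowr (cmod l) \<alpha>" using ac(2) r by (simp add: l_def)
        have "q1 r / q2 r = inverse (q2 r / q1 r)" by simp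
        also have "\<dots> = (if \<not> c then cnj l else l) * cpowr (cmod l) (- \<alpha> - 2)"
          unfolding qq by (metis mult.commute inverse_unique flip_coeff[OF l, of c \<alpha>])
        finally show "q1 r / q2 r = (if \<not> c then cnj (p1 r / p2 r) else p1 r / p2 r) * cpowr (cmod (p1 r / p2 r)) (- \<alpha> - 2)"
          by (simp add: l_def)
      qed
    qed
  qed
qed


theorem theorem6p1:
  fixes I :: "'i set"
    and S T :: "complex^2^2"
    and p1 p2 q1 q2 :: "'i \<Rightarrow> complex"
  assumes "invertible S" and "invertible T"
    and "\<forall>r\<in>I. p1 r \<noteq> 0 \<and> p2 r \<noteq> 0 \<and> q1 r \<noteq> 0 \<and> q2 r \<noteq> 0"
  shows "(\<exists>f. homeomorphic_map CP1_top CP1_top f \<and>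
            (\<forall>r\<in>I. \<forall>v\<in>CP1.
               f (pact (S ** diag2 (p1 r) (p2 r) ** matrix_inv S) v)
                 = pact (T ** diag2 (q1 r) (q2 r) ** matrix_inv T) (f v)))
     \<longleftrightarrow>
     (\<exists>\<alpha>::complex. Re \<alpha> \<noteq> -1 \<and>
        ((\<forall>r\<in>I. q1 r / q2 r = (p1 r / p2 r) * cpowr (cmod (p1 r / p2 r)) \<alpha>) \<or>
         (\<forall>r\<in>I. q1 r / q2 r = (cnj (p1 r) / cnj (p2 r)) * cpowr (cmod (p1 r / p2 r)) \<alpha>)))"
proof -
  have red: "(\<exists>f. homeomorphic_map CP1_top CP1_top f \<and>
            (\<forall>r\<in>I. \<forall>v\<in>CP1.
               f (pact (S ** diag2 (p1 r) (p2 r) ** matrix_inv S) v)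
                 = pact (T ** diag2 (q1 r) (q2 r) ** matrix_inv T) (f v)))
    \<longleftrightarrow> (\<exists>g. homeomorphic_map CP1_top CP1_top g \<and>
            (\<forall>r\<in>I. \<forall>v\<in>CP1. g (pact (diag2 (p1 r) (p2 r)) v) = pact (diag2 (q1 r) (q2 r)) (g v)))"
    using reduce_ST[OF assms(1,2), where D = "\<lambda>r. diag2 (p1 r) (p2 r)" and E = "\<lambda>r. diag2 (q1 r) (q2 r)" and I = I]
    by simp
  show ?thesis unfolding red
  proof
    assume "\<exists>g. homeomorphic_map CP1_top CP1_top g \<and>
            (\<forall>r\<in>I. \<forall>v\<in>CP1. g (pact (diag2 (p1 r) (p2 r)) v) = pact (diag2 (q1 r) (q2 r)) (g v))"
    then obtain g where g: "homeomorphic_map CP1_top CP1_top g"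
      "\<forall>r\<in>I. \<forall>v\<in>CP1. g (pact (diag2 (p1 r) (p2 r)) v) = pact (diag2 (q1 r) (q2 r)) (g v)" by blast
    obtain \<alpha> c where ac: "Re \<alpha> \<noteq> -1"
      "\<forall>r\<in>I. q1 r / q2 r = (if c then cnj (p1 r / p2 r) else p1 r / p2 r) * cpowr (cmod (p1 r / p2 r)) \<alpha>"
      using forward_diag[OF g assms(3)] by blast
    show "\<exists>\<alpha>::complex. Re \<alpha> \<noteq> -1 \<and>
        ((\<forall>r\<in>I. q1 r / q2 r = (p1 r / p2 r) * cpowr (cmod (p1 r / p2 r)) \<alpha>) \<or>
         (\<forall>r\<in>I. q1 r / q2 r = (cnj (p1 r) / cnj (p2 r)) * cpowr (cmod (p1 r / p2 r)) \<alpha>))"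
    proof (cases c)
      case True
      then show ?thesis using ac by (intro exI[of _ \<alpha>]) simp
    next
      case False
      then show ?thesis using ac by (intro exI[of _ \<alpha>]) simp
    qed
  next
    assume "\<exists>\<alpha>::complex. Re \<alpha> \<noteq> -1 \<and>
        ((\<forall>r\<in>I. q1 r / q2 r = (p1 r / p2 r) * cpowr (cmod (p1 r / p2 r)) \<alpha>) \<or>
         (\<forall>r\<in>I. q1 r / q2 r = (cnj (p1 r) / cnj (p2 r)) * cpowr (cmod (p1 r / p2 r)) \<alpha>))"
    then obtain \<alpha> where a: "Re \<alpha> \<noteq> -1" and
      o: "(\<forall>r\<in>I. q1 r / q2 r = (p1 r / p2 r) * cpowr (cmod (p1 r / p2 r)) \<alpha>) \<or>
         (\<forall>r\<in>I. q1 r / q2 r = (cnj (p1 r) / cnj (p2 r)) * cpowr (cmod (p1 r / p2 r)) \<alpha>)" by blast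
    from o show "\<exists>g. homeomorphic_map CP1_top CP1_top g \<and>
            (\<forall>r\<in>I. \<forall>v\<in>CP1. g (pact (diag2 (p1 r) (p2 r)) v) = pact (diag2 (q1 r) (q2 r)) (g v))"
    proof
      assume "\<forall>r\<in>I. q1 r / q2 r = (p1 r / p2 r) * cpowr (cmod (p1 r / p2 r)) \<alpha>"
      then show ?thesis by (intro backward_diag[OF assms(3) a, where c = False]) simp
    next
      assume "\<forall>r\<in>I. q1 r / q2 r = (cnj (p1 r) / cnj (p2 r)) * cpowr (cmod (p1 r / p2 r)) \<alpha>"
      then show ?thesis by (intro backward_diag[OF assms(3) a, where c = True]) simp
    qed
  qed
qed


end
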